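(* Let $G$ be a reduced adjusted cotorsion abelian group with torsion subgroup $T$. Then $G$ is strongly co-Hopfian if and only if $T$ is strongly co-Hopfian.
   Context: All groups are abelian. A group $G$ is strongly co-Hopfian if for every endomorphism $f$ of $G$ there is $n\in\mathbb N$ with $f^n(G)=f^{n+1}(G)$. A group is cotorsion if $\mathrm{Ext}(\mathbb Q,G)=0$; a reduced cotorsion group is adjusted if it has no non-zero torsion-free direct summand. *)

theory Defs
  imports Main "HOL.Rat"
begin

text \<open>Abelian groups are represented as subgroups (carrier sets) of an ambient
  type of class ab_group_add.\<close>

definition subgrp :: "'a::ab_group_add set \<Rightarrow> bool" where
  "subgrp S \<longleftrightarrow> 0 \<in> S \<and> (\<forall>x\<in>S. \<forall>y\<in>S. x + y \<in> S) \<and> (\<forall>x\<in>S. - x \<in> S)"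

definition natmul :: "nat \<Rightarrow> 'a::ab_group_add \<Rightarrow> 'a" where
  "natmul n x = ((\<lambda>z. z + x) ^^ n) 0"

definition endo_on :: "'a::ab_group_add set \<Rightarrow> ('a \<Rightarrow> 'a) \<Rightarrow> bool" where
  "endo_on S f \<longleftrightarrow> f ` S \<subseteq> S \<and> (\<forall>x\<in>S. \<forall>y\<in>S. f (x + y) = f x + f y)"

definition strongly_coHopfian :: "'a::ab_group_add set \<Rightarrow> bool" where
  "strongly_coHopfian S \<longleftrightarrow>
     (\<forall>f. endo_on S f \<longrightarrow> (\<exists>n::nat. (f ^^ n) ` S = (f ^^ Suc n) ` S))"

definition torsion_part :: "'a::ab_group_add set \<Rightarrow> 'a set" where
  "torsion_part G = {x \<in> G. \<exists>n>0. natmul n x = 0}"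

definition torsion_free :: "'a::ab_group_add set \<Rightarrow> bool" where
  "torsion_free A \<longleftrightarrow> (\<forall>x\<in>A. \<forall>n>0. natmul n x = 0 \<longrightarrow> x = 0)"

definition divisible :: "'a::ab_group_add set \<Rightarrow> bool" where
  "divisible D \<longleftrightarrow> (\<forall>x\<in>D. \<forall>n>0. \<exists>y\<in>D. natmul n y = x)"

definition reduced :: "'a::ab_group_add set \<Rightarrow> bool" where
  "reduced G \<longleftrightarrow> (\<forall>D. subgrp D \<and> D \<subseteq> G \<and> divisible D \<longrightarrow> D = {0})"

definition direct_summand :: "'a::ab_group_add set \<Rightarrow> 'a set \<Rightarrow> bool" where
  "direct_summand A G \<longleftrightarrow> subgrp A \<and> A \<subseteq> G \<and>
     (\<exists>B. subgrp B \<and> B \<subseteq> G \<and> A \<inter> B = {0} \<and> {a + b | a b. a \<in> A \<and> b \<in> B} = G)"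

text \<open>Ext(Q,G) = 0, via the standard description of Ext(Q,G) as symmetric
  2-cocycles Q x Q -> G modulo coboundaries (equivalently: every extension
  0 -> G -> E -> Q -> 0 splits).\<close>
definition Ext_Q_vanishes :: "'a::ab_group_add set \<Rightarrow> bool" where
  "Ext_Q_vanishes G \<longleftrightarrow>
     (\<forall>c :: rat \<Rightarrow> rat \<Rightarrow> 'a.
        (\<forall>r s. c r s \<in> G) \<and> (\<forall>r s. c r s = c s r) \<and>
        (\<forall>r s t. c r s + c (r + s) t = c s t + c r (s + t))
        \<longrightarrow> (\<exists>h :: rat \<Rightarrow> 'a. (\<forall>r. h r \<in> G) \<and> (\<forall>r s. c r s = h r + h s - h (r + s))))"

definition cotorsion :: "'a::ab_group_add set \<Rightarrow> bool" where
  "cotorsion G \<longleftrightarrow> subgrp G \<and> Ext_Q_vanishes G"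

definition adjusted :: "'a::ab_group_add set \<Rightarrow> bool" where
  "adjusted G \<longleftrightarrow> reduced G \<and> cotorsion G \<and>
     (\<forall>A. direct_summand A G \<and> torsion_free A \<longrightarrow> A = {0})"

end

theory Submission
  imports Defs "HOL-Computational_Algebra.Primes"
begin
lemma natmul_0[simp]: "natmul 0 x = 0" by (simp add: natmul_def)
lemma natmul_Suc: "natmul (Suc n) x = natmul n x + x" by (simp add: natmul_def)
lemma natmul_1[simp]: "natmul 1 x = x" by (simp add: natmul_def)
lemma natmul_Suc0[simp]: "natmul (Suc 0) x = x" by (simp add: natmul_def)
lemma natmul_add: "natmul (m + n) x = natmul m x + natmul n x"
  by (induction n) (simp_all add: natmul_Suc add.assoc)
lemma natmul_plus: "natmul n (x + y) = natmul n x + natmul n y"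
  by (induction n) (simp_all add: natmul_Suc algebra_simps)
lemma natmul_zero[simp]: "natmul n 0 = 0"
  by (induction n) (simp_all add: natmul_Suc)
lemma natmul_minus: "natmul n (- x) = - natmul n x"
  by (induction n) (simp_all add: natmul_Suc algebra_simps)
lemma natmul_diff: "natmul n (x - y) = natmul n x - natmul n y"
  using natmul_plus[of n x "-y"] natmul_minus[of n y] by simp
lemma natmul_mult: "natmul (m * n) x = natmul m (natmul n x)"
  by (induction m) (simp_all add: natmul_Suc natmul_add add.commute)
lemma natmul_sum: "natmul n (sum g A) = sum (\<lambda>i. natmul n (g i)) A"
  by (induction A rule: infinite_finite_induct) (simp_all add: natmul_plus)
lemma natmul_comm: "natmul m (natmul n x) = natmul n (natmul m x)"
  by (metis natmul_mult mult.commute)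

lemma subgrp_0: "subgrp G \<Longrightarrow> 0 \<in> G" by (simp add: subgrp_def)
lemma subgrp_add: "subgrp G \<Longrightarrow> x \<in> G \<Longrightarrow> y \<in> G \<Longrightarrow> x + y \<in> G" by (simp add: subgrp_def)
lemma subgrp_neg: "subgrp G \<Longrightarrow> x \<in> G \<Longrightarrow> - x \<in> G" by (simp add: subgrp_def)
lemma subgrp_diff: "subgrp G \<Longrightarrow> x \<in> G \<Longrightarrow> y \<in> G \<Longrightarrow> x - y \<in> G"
  using subgrp_add[of G x "-y"] subgrp_neg[of G y] by simp
lemma subgrp_natmul: "subgrp G \<Longrightarrow> x \<in> G \<Longrightarrow> natmul n x \<in> G"
  by (induction n) (simp_all add: natmul_Suc subgrp_0 subgrp_add)
lemma subgrp_sum: "subgrp G \<Longrightarrow> (\<And>i. i \<in> A \<Longrightarrow> g i \<in> G) \<Longrightarrow> sum g A \<in> G"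
  by (induction A rule: infinite_finite_induct) (simp_all add: subgrp_0 subgrp_add)

lemma endo_add: "endo_on S f \<Longrightarrow> x \<in> S \<Longrightarrow> y \<in> S \<Longrightarrow> f (x + y) = f x + f y"
  by (simp add: endo_on_def)
lemma endo_in: "endo_on S f \<Longrightarrow> x \<in> S \<Longrightarrow> f x \<in> S"
  by (auto simp add: endo_on_def)
lemma endo_0: "subgrp S \<Longrightarrow> endo_on S f \<Longrightarrow> f 0 = 0"
  using endo_add[of S f 0 0] subgrp_0[of S] by simp
lemma endo_natmul: "subgrp S \<Longrightarrow> endo_on S f \<Longrightarrow> x \<in> S \<Longrightarrow> f (natmul n x) = natmul n (f x)"
  by (induction n) (simp_all add: natmul_Suc endo_0 endo_add subgrp_natmul)
lemma endo_neg: "subgrp S \<Longrightarrow> endo_on S f \<Longrightarrow> x \<in> S \<Longrightarrow> f (- x) = - f x"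
  using endo_add[of S f x "-x"] endo_0[of S f] subgrp_neg[of S x]
  by (simp add: eq_neg_iff_add_eq_0 add.commute)
lemma endo_diff: "subgrp S \<Longrightarrow> endo_on S f \<Longrightarrow> x \<in> S \<Longrightarrow> y \<in> S \<Longrightarrow> f (x - y) = f x - f y"
  using endo_add[of S f x "-y"] endo_neg[of S f y] subgrp_neg[of S y] by simp
lemma endo_sum: "subgrp S \<Longrightarrow> endo_on S f \<Longrightarrow> (\<And>i. i \<in> A \<Longrightarrow> g i \<in> S) \<Longrightarrow> f (sum g A) = sum (\<lambda>i. f (g i)) A"
proof (induction A rule: infinite_finite_induct)
  case (insert a A) then show ?case by (simp add: endo_add subgrp_sum)
qed (simp_all add: endo_0)
lemma endo_pow: "endo_on S f \<Longrightarrow> endo_on S (f ^^ n)"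
proof (induction n)
  case 0 then show ?case by (simp add: endo_on_def)
next
  case (Suc n)
  then show ?case unfolding endo_on_def by (auto simp: image_subset_iff)
qed

definition zmul :: "int \<Rightarrow> 'a::ab_group_add \<Rightarrow> 'a" where
  "zmul k x = natmul (nat k) x - natmul (nat (- k)) x"

lemma natmul_cancel: "a + d = c + (b::nat) \<Longrightarrow> natmul a x - natmul b x = natmul c x - natmul d x"
proof -
  assume "a + d = c + b"
  then have "natmul a x + natmul d x = natmul c x + natmul b x"
    by (metis natmul_add)
  then show ?thesis by (simp add: algebra_simps)
qed

lemma zmul_repr: "k = int a - int b \<Longrightarrow> zmul k x = natmul a x - natmul b x"
  unfolding zmul_def by (rule natmul_cancel) linarith

lemma zmul_add: "zmul (k + l) x = zmul k x + zmul l x"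
proof -
  have "zmul (k + l) x = natmul (nat k + nat l) x - natmul (nat (-k) + nat (-l)) x"
    by (rule zmul_repr) linarith
  then show ?thesis unfolding zmul_def by (simp add: natmul_add algebra_simps)
qed
lemma zmul_1[simp]: "zmul 1 x = x" by (simp add: zmul_def natmul_def)
lemma zmul_in: "subgrp G \<Longrightarrow> x \<in> G \<Longrightarrow> zmul k x \<in> G"
  unfolding zmul_def by (intro subgrp_diff subgrp_natmul)

definition NN :: "(nat \<Rightarrow> nat) \<Rightarrow> nat \<Rightarrow> nat" where "NN m n = prod m {..<n}"

lemma NN_0[simp]: "NN m 0 = 1" by (simp add: NN_def)
lemma NN_Suc: "NN m (Suc n) = NN m n * m n" by (simp add: NN_def)
lemma NN_pos: "(\<And>i. m i > 0) \<Longrightarrow> NN m n > 0" by (simp add: NN_def)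
lemma NN_dvd: "n \<le> n' \<Longrightarrow> NN m n dvd NN m n'"
  unfolding NN_def by (rule prod_dvd_prod_subset) auto

context
  fixes G :: "'a::ab_group_add set" and m :: "nat \<Rightarrow> nat" and c :: "nat \<Rightarrow> 'a"
  assumes G: "subgrp G" and ext: "Ext_Q_vanishes G"
    and mpos: "\<And>i. m i > 0" and cover: "\<And>d. d > 0 \<Longrightarrow> \<exists>n. d dvd NN m n"
    and cG: "\<And>n. c n \<in> G"
begin

definition DD :: "rat \<Rightarrow> nat \<Rightarrow> 'a" where
  "DD r L = (\<Sum>j<L. if r * of_nat (NN m j) \<in> \<int> then zmul \<lfloor>r * of_nat (NN m j)\<rfloor> (c j) else 0)"

definition KK :: "rat \<Rightarrow> nat" where "KK r = (LEAST n. r * of_nat (NN m n) \<in> \<int>)"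

lemma int_mono: "(r::rat) * of_nat (NN m n) \<in> \<int> \<Longrightarrow> n \<le> n' \<Longrightarrow> r * of_nat (NN m n') \<in> \<int>"
proof -
  assume a: "r * of_nat (NN m n) \<in> \<int>" and "n \<le> n'"
  then obtain q where q: "NN m n' = NN m n * q" using NN_dvd by blast
  have "r * of_nat (NN m n') = (r * of_nat (NN m n)) * of_nat q" by (simp add: q mult.assoc)
  then show ?thesis using a by (metis Ints_mult Ints_of_nat)
qed

lemma KK_ex: "\<exists>n. (r::rat) * of_nat (NN m n) \<in> \<int>"
proof -
  obtain a b where ab: "quotient_of r = (a, b)" by (cases "quotient_of r")
  then have b: "b > 0" and r: "r = of_int a / of_int b" using quotient_of_denom_pos quotient_of_div by auto
  obtain n where "nat b dvd NN m n" using cover[of "nat b"] b by auto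
  then obtain q where q: "NN m n = nat b * q" by blast
  have "r * of_nat (NN m n) = of_int a * of_nat q"
    using b by (simp add: r q)
  then show ?thesis by (intro exI[of _ n]) simp
qed

lemma KK_int: "KK r \<le> L \<Longrightarrow> r * of_nat (NN m L) \<in> \<int>"
proof -
  assume "KK r \<le> L"
  have "r * of_nat (NN m (KK r)) \<in> \<int>" unfolding KK_def by (rule LeastI_ex) (rule KK_ex)
  then show ?thesis using \<open>KK r \<le> L\<close> by (rule int_mono)
qed

lemma KK_le: "r * of_nat (NN m L) \<in> \<int> \<Longrightarrow> KK r \<le> L"
  unfolding KK_def by (rule Least_le)

lemma DD_Suc: "DD r (Suc L) = DD r L + (if r * of_nat (NN m L) \<in> \<int> then zmul \<lfloor>r * of_nat (NN m L)\<rfloor> (c L) else 0)"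
  unfolding DD_def by simp

lemma DD_in: "DD r L \<in> G"
  unfolding DD_def by (rule subgrp_sum[OF G]) (auto simp: zmul_in[OF G cG] subgrp_0[OF G])

lemma floor_add_ints: "(x::rat) \<in> \<int> \<Longrightarrow> y \<in> \<int> \<Longrightarrow> \<lfloor>x + y\<rfloor> = \<lfloor>x\<rfloor> + \<lfloor>y\<rfloor>"
  by (auto elim!: Ints_cases)

definition cc :: "rat \<Rightarrow> rat \<Rightarrow> 'a" where
  "cc r s = DD (r + s) (max (KK r) (KK s)) - DD r (max (KK r) (KK s)) - DD s (max (KK r) (KK s))"

lemma cc_eq: "KK r \<le> L \<Longrightarrow> KK s \<le> L \<Longrightarrow> cc r s = DD (r + s) L - DD r L - DD s L"
proof -
  assume "KK r \<le> L" "KK s \<le> L"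
  then have "max (KK r) (KK s) \<le> L" by simp
  then show ?thesis
  proof (induction L rule: dec_induct)
    case base then show ?case by (simp add: cc_def)
  next
    case (step L)
    have i1: "r * of_nat (NN m L) \<in> \<int>" using step(1) by (intro KK_int) simp
    have i2: "s * of_nat (NN m L) \<in> \<int>" using step(1) by (intro KK_int) simp
    have i3: "(r + s) * of_nat (NN m L) \<in> \<int>" using i1 i2 by (simp add: distrib_right)
    have fl: "\<lfloor>(r + s) * of_nat (NN m L)\<rfloor> = \<lfloor>r * of_nat (NN m L)\<rfloor> + \<lfloor>s * of_nat (NN m L)\<rfloor>"
      using floor_add_ints[OF i1 i2] by (simp add: distrib_right)
    show ?case using step(3) i1 i2 i3 by (simp add: DD_Suc fl zmul_add algebra_simps)
  qed
qed

lemma cc_cocycle: "cc r s + cc (r + s) t = cc s t + cc r (s + t)"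
proof -
  define L where "L = KK r + KK s + KK t + KK (r + s) + KK (s + t)"
  have e1: "cc r s = DD (r + s) L - DD r L - DD s L" by (rule cc_eq) (auto simp: L_def)
  have e2: "cc (r + s) t = DD (r + s + t) L - DD (r + s) L - DD t L" by (rule cc_eq) (auto simp: L_def)
  have e3: "cc s t = DD (s + t) L - DD s L - DD t L" by (rule cc_eq) (auto simp: L_def)
  have e4: "cc r (s + t) = DD (r + (s + t)) L - DD r L - DD (s + t) L" by (rule cc_eq) (auto simp: L_def)
  show ?thesis unfolding e1 e2 e3 e4 by (simp add: add.assoc)
qed

lemma cc_sym: "cc r s = cc s r"
proof -
  have "max (KK r) (KK s) = max (KK s) (KK r)" by simp
  then show ?thesis unfolding cc_def by (simp add: add.commute[of r s])
qed

lemma cc_in: "cc r s \<in> G"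
  unfolding cc_def by (intro subgrp_diff[OF G] DD_in)

lemma L1_exists: "\<exists>y. (\<forall>n. y n \<in> G) \<and> (\<forall>n. natmul (m n) (y (Suc n)) = y n + c n)"
proof -
  obtain h where hG: "\<And>r. h r \<in> G" and hc: "\<And>r s. cc r s = h r + h s - h (r + s)"
    using ext unfolding Ext_Q_vanishes_def using cc_in cc_sym cc_cocycle by blast
  define psi where "psi L r = h r + DD r L" for L r
  have padd: "psi L (r + s) = psi L r + psi L s" if "KK r \<le> L" "KK s \<le> L" for L r s
    using hc[of r s] cc_eq[OF that] unfolding psi_def by (simp add: algebra_simps)
  have K0: "KK 0 \<le> L" for L by (rule KK_le) simp
  have p0: "psi L 0 = 0" for L using padd[OF K0 K0, of L] by simp
  have pmul: "natmul i (psi L a) = psi L (of_nat i * a)" if "KK a \<le> L" for i L a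
  proof (induction i)
    case 0 then show ?case by (simp add: p0)
  next
    case (Suc i)
    have "KK (of_nat i * a) \<le> L"
      using KK_int[OF that] by (intro KK_le) (simp add: mult.assoc)
    then have "psi L (of_nat (Suc i) * a) = psi L (of_nat i * a) + psi L a"
      using padd[of "of_nat i * a" L a] that by (simp add: distrib_right add.commute)
    then show ?case using Suc by (simp add: natmul_Suc)
  qed
  define y where "y n = psi n (1 / of_nat (NN m n))" for n
  have Npos: "NN m n > 0" for n using NN_pos mpos by blast
  have yG: "y n \<in> G" for n unfolding y_def psi_def by (intro subgrp_add[OF G] hG DD_in)
  have "natmul (m n) (y (Suc n)) = y n + c n" for n
  proof -
    have Kn: "KK (1 / of_nat (NN m (Suc n))) \<le> Suc n"
      by (rule KK_le) (use Npos[of "Suc n"] in simp)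
    have eq: "of_nat (m n) * (1 / of_nat (NN m (Suc n))) = (1 / of_nat (NN m n) :: rat)"
      using Npos[of n] mpos[of n] by (simp add: NN_Suc)
    have "natmul (m n) (y (Suc n)) = psi (Suc n) (1 / of_nat (NN m n))"
      unfolding y_def using pmul[OF Kn, of "m n"] eq by simp
    also have "\<dots> = y n + c n"
      using Npos[of n] unfolding psi_def y_def by (simp add: DD_Suc algebra_simps)
    finally show ?thesis .
  qed
  then show ?thesis using yG by blast
qed

end

definition mul_set :: "nat \<Rightarrow> 'a::ab_group_add set \<Rightarrow> 'a set" where
  "mul_set n A = natmul n ` A"

lemma GL:
  fixes G :: "'a::ab_group_add set" and m :: "nat \<Rightarrow> nat" and s :: "nat \<Rightarrow> 'a"
  assumes G: "subgrp G" and ext: "Ext_Q_vanishes G"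
    and mpos: "\<And>i. m i > 0" and cover: "\<And>d. d > 0 \<Longrightarrow> \<exists>n. d dvd NN m n"
    and sG: "\<And>n. s n \<in> G" and sd: "\<And>n. s (Suc n) - s n \<in> mul_set (NN m n) G"
  shows "\<exists>g\<in>G. \<forall>n. g - s n \<in> mul_set (NN m n) G"
proof -
  obtain b where bG: "\<And>n. b n \<in> G" and bs: "\<And>n. s (Suc n) - s n = natmul (NN m n) (b n)"
    using sd unfolding mul_set_def image_iff by metis
  obtain y where yG: "\<And>n. y n \<in> G" and yr: "\<And>n. natmul (m n) (y (Suc n)) = y n + - b n"
    using L1_exists[OF G ext mpos cover, of "\<lambda>n. - b n"] bG subgrp_neg[OF G] by blast
  define g where "g = s 0 + y 0"
  have "g = s n + natmul (NN m n) (y n)" for n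
  proof (induction n)
    case 0 then show ?case by (simp add: g_def natmul_def)
  next
    case (Suc n)
    have "s (Suc n) + natmul (NN m (Suc n)) (y (Suc n)) = s n + natmul (NN m n) (b n) + natmul (NN m n) (y n + - b n)"
    proof -
      have "natmul (NN m (Suc n)) (y (Suc n)) = natmul (NN m n) (natmul (m n) (y (Suc n)))"
        by (simp add: NN_Suc natmul_mult)
      then show ?thesis using bs[of n] yr[of n] by (simp add: algebra_simps)
    qed
    also have "\<dots> = s n + natmul (NN m n) (y n)" by (simp add: natmul_plus natmul_minus natmul_diff)
    finally show ?case using Suc by simp
  qed
  then have "g - s n \<in> mul_set (NN m n) G" for n using yG unfolding mul_set_def
    by (metis add_diff_cancel_left' image_eqI)
  moreover have "g \<in> G" unfolding g_def by (intro subgrp_add[OF G] sG yG)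
  ultimately show ?thesis by blast
qed

definition ptors :: "nat \<Rightarrow> 'a::ab_group_add set \<Rightarrow> 'a set" where
  "ptors p G = {x \<in> G. \<exists>j. natmul (p ^ j) x = 0}"

lemma mul_set_subgrp: assumes G: "subgrp G" shows "subgrp (mul_set n G)"
proof -
  have "0 \<in> natmul n ` G" using subgrp_0[OF G] natmul_zero by (metis image_eqI)
  moreover have "x + y \<in> natmul n ` G" if xy: "x \<in> natmul n ` G" "y \<in> natmul n ` G" for x y
  proof -
    obtain a where "a \<in> G" "x = natmul n a" using xy(1) by auto
    moreover obtain b where "b \<in> G" "y = natmul n b" using xy(2) by auto
    ultimately
    show ?thesis using subgrp_add[OF G] natmul_plus by (metis image_eqI)
  qed
  moreover have "- x \<in> natmul n ` G" if xx: "x \<in> natmul n ` G" for x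
  proof -
    obtain a where "a \<in> G" "x = natmul n a" using xx by auto
    then show ?thesis using subgrp_neg[OF G] natmul_minus by (metis image_eqI)
  qed
  ultimately show ?thesis unfolding subgrp_def mul_set_def by blast
qed

lemma mul_set_sub: "subgrp G \<Longrightarrow> mul_set n G \<subseteq> G"
  unfolding mul_set_def using subgrp_natmul by blast

lemma mul_set_in: "x \<in> G \<Longrightarrow> natmul n x \<in> mul_set n G"
  unfolding mul_set_def by blast

lemma mul_set_natmul: "subgrp G \<Longrightarrow> x \<in> mul_set n G \<Longrightarrow> natmul k x \<in> mul_set n G"
proof -
  assume G: "subgrp G" and "x \<in> mul_set n G"
  then obtain g where g: "g \<in> G" "x = natmul n g" unfolding mul_set_def by auto
  then have "natmul k x = natmul n (natmul k g)" using natmul_comm by metis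
  then show ?thesis using subgrp_natmul[OF G g(1)] unfolding mul_set_def by blast
qed

lemma mul_set_dvd: "subgrp G \<Longrightarrow> d dvd n \<Longrightarrow> mul_set n G \<subseteq> mul_set d G"
  unfolding mul_set_def
  by (auto elim!: dvdE simp: natmul_mult subgrp_natmul)

lemma mul_set_mult: "subgrp G \<Longrightarrow> x \<in> mul_set a (mul_set b G) \<longleftrightarrow> x \<in> mul_set (a * b) G"
  unfolding mul_set_def by (auto simp: natmul_mult)

lemma CD: "natmul n x = 0 \<Longrightarrow> coprime d n \<Longrightarrow> \<exists>u. natmul d (natmul u x) = x"
proof (cases "d = 0")
  case True
  assume "natmul n x = 0" "coprime d n"
  then have "n = 1" using True by simp
  then show ?thesis using \<open>natmul n x = 0\<close> by (intro exI[of _ 0]) simp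
next
  case False
  assume a: "natmul n x = 0" "coprime d n"
  obtain u v where uv: "d * u = n * v + gcd d n" using bezout_nat[OF False] by blast
  then have "d * u = v * n + 1" using a(2) by simp
  then have "natmul (d * u) x = natmul v (natmul n x) + x"
    by (simp add: natmul_Suc natmul_mult[symmetric])
  then show ?thesis using a(1) by (auto simp: natmul_mult)
qed

lemma ptors_sub: "ptors p G \<subseteq> G" unfolding ptors_def by auto

lemma ptors_subgrp: "subgrp G \<Longrightarrow> subgrp (ptors p G)"
  unfolding subgrp_def ptors_def
proof (intro conjI ballI)
  fix x y assume G: "0 \<in> G \<and> (\<forall>x\<in>G. \<forall>y\<in>G. x + y \<in> G) \<and> (\<forall>x\<in>G. - x \<in> G)"
    and x: "x \<in> {x \<in> G. \<exists>j. natmul (p ^ j) x = 0}" and y: "y \<in> {x \<in> G. \<exists>j. natmul (p ^ j) x = 0}"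
  then obtain i j where i: "natmul (p ^ i) x = 0" and j: "natmul (p ^ j) y = 0" by auto
  have "natmul (p ^ (i + j)) (x + y) = 0"
    by (simp add: natmul_plus power_add natmul_mult i j)
      (metis mult.commute natmul_mult natmul_zero i)
  then show "x + y \<in> {x \<in> G. \<exists>j. natmul (p ^ j) x = 0}" using G x y by auto
qed (auto simp: natmul_minus)

lemma ptors_natmul: "subgrp G \<Longrightarrow> x \<in> ptors p G \<Longrightarrow> natmul k x \<in> ptors p G"
proof -
  assume G: "subgrp G" and "x \<in> ptors p G"
  then obtain j where x: "x \<in> G" "natmul (p ^ j) x = 0" unfolding ptors_def by auto
  then have "natmul (p ^ j) (natmul k x) = 0" using natmul_comm by (metis natmul_zero)
  then show ?thesis using subgrp_natmul[OF G x(1)] unfolding ptors_def by blast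
qed

lemma ptors_torsion: "prime p \<Longrightarrow> ptors p G \<subseteq> torsion_part G"
  unfolding ptors_def torsion_part_def using prime_gt_0_nat by (auto intro!: exI[of _ "p ^ _"])

lemma ptors_div: "prime p \<Longrightarrow> subgrp G \<Longrightarrow> x \<in> ptors p G \<Longrightarrow> coprime d p \<Longrightarrow> \<exists>y\<in>ptors p G. natmul d y = x"
proof -
  assume p: "prime p" and G: "subgrp G" and x: "x \<in> ptors p G" and d: "coprime d p"
  then obtain j where "natmul (p ^ j) x = 0" unfolding ptors_def by auto
  moreover have "coprime d (p ^ j)" using d by simp
  ultimately obtain u where "natmul d (natmul u x) = x" using CD by blast
  then show ?thesis using ptors_natmul[OF G x] by blast
qed

lemma ptors_in_mul_set: "prime p \<Longrightarrow> subgrp G \<Longrightarrow> x \<in> ptors p G \<Longrightarrow> coprime d p \<Longrightarrow> x \<in> mul_set d G"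
  using ptors_div[of p G x d] ptors_sub unfolding mul_set_def by blast

lemma ptors_back: "g \<in> G \<Longrightarrow> natmul (p ^ a) g \<in> ptors p G \<Longrightarrow> g \<in> ptors p G"
  unfolding ptors_def by (auto simp: natmul_mult[symmetric] power_add[symmetric])

lemma bounded_ptors:
  assumes G: "subgrp G" and red: "reduced G" and p: "prime p"
    and hyp: "\<And>t a. t \<in> ptors p G \<Longrightarrow> \<exists>g\<in>ptors p G. natmul (p ^ N) t = natmul (p ^ (N + a)) g"
  shows "t \<in> ptors p G \<Longrightarrow> natmul (p ^ N) t = 0"
proof -
  assume t: "t \<in> ptors p G"
  define D where "D = natmul (p ^ N) ` ptors p G"
  have PG: "subgrp (ptors p G)" using ptors_subgrp[OF G] .
  have sD: "subgrp D" unfolding D_def using mul_set_subgrp[OF PG] unfolding mul_set_def .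
  have DG: "D \<subseteq> G" unfolding D_def using subgrp_natmul[OF G] ptors_sub by blast
  have dD: "divisible D" unfolding divisible_def
  proof (intro ballI allI impI)
    fix d n assume "d \<in> D" "0 < (n::nat)"
    then obtain t0 where t0: "t0 \<in> ptors p G" and d: "d = natmul (p ^ N) t0" unfolding D_def by auto
    obtain y where ny: "n = p ^ multiplicity p n * y" and py: "\<not> p dvd y"
      using multiplicity_decompose'[of n p] \<open>0 < n\<close> p by (metis not_prime_unit neq0_conv)
    define a where "a = multiplicity p n"
    obtain g where g: "g \<in> ptors p G" and dg: "d = natmul (p ^ (N + a)) g" using hyp[OF t0, of a] d by auto
    define e1 where "e1 = natmul (p ^ N) g"
    have e1P: "e1 \<in> ptors p G" unfolding e1_def using ptors_natmul[OF G g] .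
    then obtain j where j: "natmul (p ^ j) e1 = 0" unfolding ptors_def by auto
    have "coprime y (p ^ j)" using py p by (simp add: prime_imp_coprime coprime_commute)
    then obtain u where u: "natmul y (natmul u e1) = e1" using CD[OF j] by blast
    define e where "e = natmul u e1"
    have eD: "e \<in> D" unfolding e_def e1_def D_def using ptors_natmul[OF G g]
    by (metis image_eqI natmul_comm)
    have "natmul n e = natmul (p ^ a) (natmul y e)" unfolding a_def by (subst ny) (simp add: natmul_mult)
    also have "\<dots> = natmul (p ^ a) e1" using u e_def by simp
    also have "\<dots> = d" unfolding e1_def dg by (simp add: natmul_mult[symmetric] power_add mult.commute)
    finally show "\<exists>y\<in>D. natmul n y = d" using eD by blast
  qed
  have "D = {0}" using red sD DG dD unfolding reduced_def by blast
  then show ?thesis using t unfolding D_def by auto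
qed

lemma natmul_pow_Suc: "natmul (q ^ Suc k) g = natmul q (natmul (q ^ k) g)"
  by (simp add: natmul_mult)

lemma ptors_inter0:
  assumes G: "subgrp G" and t: "t \<in> ptors p G" and tm: "t \<in> mul_set (p ^ k) G"
    and bnd: "\<forall>s\<in>ptors p G. natmul (p ^ k) s = 0"
  shows "t = 0"
proof -
  obtain g where g: "g \<in> G" "t = natmul (p ^ k) g" using tm unfolding mul_set_def by auto
  then have "g \<in> ptors p G" using ptors_back t by metis
  then show ?thesis using bnd g by simp
qed

lemma Vzero:
  fixes G :: "'a::ab_group_add set"
  assumes G: "subgrp G" and red: "reduced G"
    and bnd: "\<And>q. prime q \<Longrightarrow> \<exists>k. \<forall>t\<in>ptors q G. natmul (q ^ k) t = 0"
    and x: "x \<in> G" and xV: "\<And>q j. prime q \<Longrightarrow> x \<in> mul_set (q ^ j) G"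
  shows "x = 0"
proof -
  define V where "V = {x \<in> G. \<forall>q j. prime q \<longrightarrow> x \<in> mul_set (q ^ j) G}"
  have sV: "subgrp V" unfolding subgrp_def V_def
    using mul_set_subgrp[OF G] subgrp_0 subgrp_add subgrp_neg G
    by (auto simp: subgrp_0 subgrp_add subgrp_neg)
  have VG: "V \<subseteq> G" unfolding V_def by auto
  have qdiv: "\<exists>y\<in>V. natmul q y = x" if xV: "x \<in> V" and q: "prime q" for x q
  proof -
    obtain k where k: "\<forall>t\<in>ptors q G. natmul (q ^ k) t = 0" using bnd[OF q] by blast
    have xG: "x \<in> G" using xV VG by auto
    have "x \<in> mul_set (q ^ Suc k) G" using xV q unfolding V_def by blast
    then obtain g where g: "g \<in> G" "x = natmul (q ^ Suc k) g" unfolding mul_set_def by auto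
    define y where "y = natmul (q ^ k) g"
    have yG: "y \<in> G" unfolding y_def using subgrp_natmul[OF G g(1)] .
    have qy: "natmul q y = x" unfolding y_def g(2) natmul_pow_Suc ..
    have "y \<in> mul_set (r ^ j) G" if r: "prime r" for r j
    proof (cases "r = q")
      case False
      have cop: "coprime q (r ^ j)" using primes_coprime[OF q r] False by simp
      have "q \<noteq> 0" using q by auto
      obtain a b where ab: "q * a = r ^ j * b + gcd q (r ^ j)" using bezout_nat[OF \<open>q \<noteq> 0\<close>] by blast
      then have ab': "q * a = r ^ j * b + 1" using cop by simp
      have "natmul (q * a) y = natmul (r ^ j * b) y + y" unfolding ab' by (simp add: natmul_Suc)
      moreover have "natmul (q * a) y = natmul a x"
        using qy by (metis natmul_mult mult.commute)
      ultimately have yeq: "y = natmul a x - natmul (r ^ j) (natmul b y)"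
        by (simp add: natmul_mult algebra_simps natmul_comm[of b])
      have "x \<in> mul_set (r ^ j) G" using xV r unfolding V_def by blast
      then have "natmul a x \<in> mul_set (r ^ j) G" using mul_set_natmul[OF G] by blast
      moreover have "natmul (r ^ j) (natmul b y) \<in> mul_set (r ^ j) G"
        using mul_set_in subgrp_natmul[OF G yG] by blast
      ultimately show ?thesis by (subst yeq) (rule subgrp_diff[OF mul_set_subgrp[OF G]])
    next
      case True
      have "x \<in> mul_set (q ^ Suc (k + j)) G" using xV q unfolding V_def by blast
      then obtain g' where g': "g' \<in> G" "x = natmul (q ^ Suc (k + j)) g'" unfolding mul_set_def by auto
      define z where "z = g - natmul (q ^ j) g'"
      have zG: "z \<in> G" unfolding z_def using G g(1) g'(1) by (simp add: subgrp_diff subgrp_natmul)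
      have yz: "y - natmul (q ^ (k + j)) g' = natmul (q ^ k) z"
        unfolding z_def y_def by (simp add: natmul_diff natmul_mult[symmetric] power_add)
      have "natmul q (natmul (q ^ k) z) = natmul q y - natmul q (natmul (q ^ (k + j)) g')"
        unfolding yz[symmetric] by (simp add: natmul_diff)
      also have "\<dots> = 0" using qy g'(2) natmul_pow_Suc[of q "k + j" g'] by simp
      finally have "natmul (q ^ Suc k) z = 0" by (simp only: natmul_pow_Suc)
      then have "z \<in> ptors q G" unfolding ptors_def using zG by blast
      then have "natmul (q ^ k) z = 0" using k by blast
      then have "y = natmul (q ^ j) (natmul (q ^ k) g')" using yz by (simp add: natmul_mult[symmetric] power_add mult.commute)
      then show ?thesis using True mul_set_in subgrp_natmul[OF G g'(1)] by metis
    qed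
    then have "y \<in> V" unfolding V_def using yG by blast
    then show ?thesis using qy by blast
  qed
  have dV: "divisible V" unfolding divisible_def
  proof (intro ballI allI impI)
    fix x n assume xV: "x \<in> V" and n: "0 < (n::nat)"
    then show "\<exists>y\<in>V. natmul n y = x"
    proof (induction n arbitrary: x rule: less_induct)
      case (less n)
      show ?case
      proof (cases "n = 1")
        case True then show ?thesis using less.prems by auto
      next
        case False
        then obtain q where q: "prime q" "q dvd n" using prime_factor_nat by blast
        then obtain n' where n': "n = q * n'" by blast
        have "n' < n" "0 < n'" using n' less.prems(2) q(1) prime_gt_1_nat by (auto simp: n')
        then obtain y1 where y1: "y1 \<in> V" "natmul n' y1 = x" using less.IH less.prems(1) by blast
        obtain y where y: "y \<in> V" "natmul q y = y1" using qdiv[OF y1(1) q(1)] by blast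
        have "natmul n y = x" using y y1 by (simp add: n' mult.commute natmul_mult)
        then show ?thesis using y by blast
      qed
    qed
  qed
  have "V = {0}" using red sV VG dV unfolding reduced_def by blast
  moreover have "x \<in> V" unfolding V_def using x xV by blast
  ultimately show ?thesis by blast
qed

context
  fixes G :: "'a::ab_group_add set"
  assumes G: "subgrp G" and red: "reduced G" and ext: "Ext_Q_vanishes G"
    and S: "\<And>p. prime p \<Longrightarrow> \<exists>k. 0 < k \<and> (\<forall>t\<in>ptors p G. natmul (p ^ k) t = 0) \<and>
                 (\<forall>x\<in>G. \<exists>t\<in>ptors p G. x - t \<in> mul_set (p ^ k) G)"
begin

definition kk :: "nat \<Rightarrow> nat" where
  "kk p = (SOME k. 0 < k \<and> (\<forall>t\<in>ptors p G. natmul (p ^ k) t = 0) \<and> (\<forall>x\<in>G. \<exists>t\<in>ptors p G. x - t \<in> mul_set (p ^ k) G))"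

lemma kk: assumes "prime p"
  shows "\<forall>t\<in>ptors p G. natmul (p ^ kk p) t = 0" "0 < kk p" "\<forall>x\<in>G. \<exists>t\<in>ptors p G. x - t \<in> mul_set (p ^ kk p) G"
  using someI_ex[OF S[OF assms]] unfolding kk_def by blast+

definition pr :: "nat \<Rightarrow> 'a \<Rightarrow> 'a" where
  "pr p x = (THE t. t \<in> ptors p G \<and> x - t \<in> mul_set (p ^ kk p) G)"

lemma pr_unique:
  assumes p: "prime p" and t: "t \<in> ptors p G" "x - t \<in> mul_set (p ^ kk p) G"
    and t': "t' \<in> ptors p G" "x - t' \<in> mul_set (p ^ kk p) G"
  shows "t = t'"
proof -
  have "t - t' = (x - t') - (x - t)" by simp
  then have "t - t' \<in> mul_set (p ^ kk p) G" using t t' subgrp_diff[OF mul_set_subgrp[OF G]] by metis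
  moreover have "t - t' \<in> ptors p G" using subgrp_diff[OF ptors_subgrp[OF G] t(1) t'(1)] .
  ultimately have "t - t' = 0" using ptors_inter0[OF G] kk(1)[OF p] by blast
  then show ?thesis by simp
qed

lemma pr_char: "prime p \<Longrightarrow> t \<in> ptors p G \<Longrightarrow> x - t \<in> mul_set (p ^ kk p) G \<Longrightarrow> pr p x = t"
  unfolding pr_def by (rule the1_equality) (auto intro: pr_unique)

lemma pr_prop: assumes p: "prime p" and x: "x \<in> G"
  shows "pr p x \<in> ptors p G" "x - pr p x \<in> mul_set (p ^ kk p) G"
proof -
  obtain t where t: "t \<in> ptors p G" "x - t \<in> mul_set (p ^ kk p) G" using kk(3)[OF p] x by blast
  then have "pr p x = t" using pr_char[OF p] by blast
  then show "pr p x \<in> ptors p G" "x - pr p x \<in> mul_set (p ^ kk p) G" using t by auto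
qed

lemma pr_G: "prime p \<Longrightarrow> x \<in> G \<Longrightarrow> pr p x \<in> G"
  using pr_prop(1) ptors_sub by blast

lemma pr_ptors: "prime p \<Longrightarrow> t \<in> ptors p G \<Longrightarrow> pr p t = t"
  by (rule pr_char) (auto simp: mul_set_subgrp[OF G] subgrp_0)

lemma pr_zero: "prime p \<Longrightarrow> y \<in> mul_set (p ^ kk p) G \<Longrightarrow> pr p y = 0"
  by (rule pr_char) (auto simp: ptors_subgrp[OF G] subgrp_0)

lemma pr_other: "prime p \<Longrightarrow> prime q \<Longrightarrow> p \<noteq> q \<Longrightarrow> t \<in> ptors q G \<Longrightarrow> pr p t = 0"
proof -
  assume p: "prime p" and q: "prime q" and pq: "p \<noteq> q" and t: "t \<in> ptors q G"
  have "coprime (p ^ kk p) q" using primes_coprime[OF p q pq] by simp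
  then have "t \<in> mul_set (p ^ kk p) G" using ptors_in_mul_set[OF q G t] by blast
  then show ?thesis using pr_zero[OF p] by blast
qed

lemma pr_endo: assumes p: "prime p" and f: "endo_on G f" and x: "x \<in> G"
  shows "pr p (f x) = f (pr p x)"
proof (rule pr_char[OF p])
  have t: "pr p x \<in> ptors p G" using pr_prop[OF p x] by blast
  then obtain j where j: "natmul (p ^ j) (pr p x) = 0" unfolding ptors_def by auto
  have tG: "pr p x \<in> G" using t ptors_sub by blast
  have "natmul (p ^ j) (f (pr p x)) = 0" using endo_natmul[OF G f tG, of "p ^ j"] j endo_0[OF G f] by simp
  then show "f (pr p x) \<in> ptors p G" unfolding ptors_def using endo_in[OF f tG] by blast
  obtain g where g: "g \<in> G" "x - pr p x = natmul (p ^ kk p) g" using pr_prop(2)[OF p x] unfolding mul_set_def by auto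
  have "f x - f (pr p x) = f (x - pr p x)" using endo_diff[OF G f x tG] by simp
  also have "\<dots> = natmul (p ^ kk p) (f g)" using g endo_natmul[OF G f] by simp
  finally show "f x - f (pr p x) \<in> mul_set (p ^ kk p) G" using mul_set_in endo_in[OF f g(1)] by metis
qed

lemma pr_add: assumes p: "prime p" and x: "x \<in> G" and y: "y \<in> G"
  shows "pr p (x + y) = pr p x + pr p y"
proof (rule pr_char[OF p])
  show "pr p x + pr p y \<in> ptors p G" using pr_prop(1)[OF p] x y subgrp_add[OF ptors_subgrp[OF G]] by blast
  have "x + y - (pr p x + pr p y) = (x - pr p x) + (y - pr p y)" by simp
  then show "x + y - (pr p x + pr p y) \<in> mul_set (p ^ kk p) G"
    using pr_prop(2)[OF p] x y subgrp_add[OF mul_set_subgrp[OF G]] by metis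
qed

lemma pr_diff: assumes p: "prime p" and x: "x \<in> G" and y: "y \<in> G"
  shows "pr p (x - y) = pr p x - pr p y"
  using pr_add[OF p subgrp_diff[OF G x y] y] by simp

lemma pr_sum: "prime p \<Longrightarrow> (\<And>i. i \<in> A \<Longrightarrow> g i \<in> G) \<Longrightarrow> pr p (sum g A) = (\<Sum>i\<in>A. pr p (g i))"
proof (induction A rule: infinite_finite_induct)
  case (infinite A) then show ?case using pr_zero[of p 0] subgrp_0[OF mul_set_subgrp[OF G]] by simp
next
  case empty then show ?case using pr_zero[of p 0] subgrp_0[OF mul_set_subgrp[OF G]] by simp
next
  case (insert a A)
  then show ?case by (simp add: pr_add subgrp_sum[OF G])
qed

lemma mul_set_pdiv: assumes p: "prime p" and y: "y \<in> mul_set (p ^ kk p) G"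
  shows "y \<in> mul_set (p ^ j) G"
proof -
  define k where "k = kk p"
  have step: "mul_set (p ^ k) G \<subseteq> mul_set (p ^ (k + k)) G"
  proof
    fix x assume "x \<in> mul_set (p ^ k) G"
    then obtain g where g: "g \<in> G" "x = natmul (p ^ k) g" unfolding mul_set_def by auto
    obtain t where t: "t \<in> ptors p G" "g - t \<in> mul_set (p ^ k) G" using kk(3)[OF p] g(1) unfolding k_def by blast
    obtain g' where g': "g' \<in> G" "g - t = natmul (p ^ k) g'" using t(2) unfolding mul_set_def by auto
    have "natmul (p ^ k) t = 0" using kk(1)[OF p] t(1) unfolding k_def by blast
    then have "x = natmul (p ^ k) (g - t)" using g(2) by (simp add: natmul_diff)
    also have "\<dots> = natmul (p ^ (k + k)) g'" using g'(2) by (simp add: power_add natmul_mult)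
    finally show "x \<in> mul_set (p ^ (k + k)) G" using mul_set_in g'(1) by metis
  qed
  have "mul_set (p ^ k) G \<subseteq> mul_set (p ^ (k * Suc i)) G" for i
  proof (induction i)
    case 0 then show ?case by simp
  next
    case (Suc i)
    show ?case
    proof
      fix x assume "x \<in> mul_set (p ^ k) G"
      then have "x \<in> mul_set (p ^ (k * Suc i)) G" using Suc by blast
      then obtain g where g: "g \<in> G" "x = natmul (p ^ (k * Suc i)) g" unfolding mul_set_def by auto
      have "natmul (p ^ k) g \<in> mul_set (p ^ (k + k)) G" using step mul_set_in g(1) by blast
      then obtain g' where g': "g' \<in> G" "natmul (p ^ k) g = natmul (p ^ (k + k)) g'" unfolding mul_set_def by auto
      have "x = natmul (p ^ (k * i)) (natmul (p ^ k) g)"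
        using g(2) by (simp add: natmul_mult[symmetric] power_add[symmetric] algebra_simps)
      also have "\<dots> = natmul (p ^ (k * Suc (Suc i))) g'"
        using g'(2) by (simp add: natmul_mult[symmetric] power_add[symmetric] algebra_simps)
      finally show "x \<in> mul_set (p ^ (k * Suc (Suc i))) G" using mul_set_in g'(1) by metis
    qed
  qed
  then have "y \<in> mul_set (p ^ (k * Suc j)) G" using y unfolding k_def by blast
  moreover have "p ^ j dvd p ^ (k * Suc j)"
  proof (rule le_imp_power_dvd)
    have k1: "1 \<le> k" using kk(2)[OF p] unfolding k_def by simp
    have "1 * j \<le> k * j" by (rule mult_le_mono1[OF k1])
    then show "j \<le> k * Suc j" unfolding mult_Suc_right by linarith
  qed
  ultimately show ?thesis using mul_set_dvd[OF G] by blast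
qed

lemma pr_inj: assumes x: "x \<in> G" and z: "\<And>p. prime p \<Longrightarrow> pr p x = 0" shows "x = 0"
proof (rule Vzero[OF G red _ x])
  show "\<exists>k. \<forall>t\<in>ptors q G. natmul (q ^ k) t = 0" if "prime q" for q :: nat using kk(1)[OF that] by blast
  fix q j :: nat assume q: "prime q"
  have "x \<in> mul_set (q ^ kk q) G" using pr_prop(2)[OF q x] z[OF q] by simp
  then show "x \<in> mul_set (q ^ j) G" using mul_set_pdiv[OF q] by blast
qed

lemma pr_eqI: "x \<in> G \<Longrightarrow> y \<in> G \<Longrightarrow> (\<And>p. prime p \<Longrightarrow> pr p x = pr p y) \<Longrightarrow> x = y"
  using pr_inj[of "x - y"] pr_diff subgrp_diff[OF G] by force

lemma pr_pr: "prime p \<Longrightarrow> prime q \<Longrightarrow> x \<in> G \<Longrightarrow> pr p (pr q x) = (if p = q then pr q x else 0)"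
  using pr_ptors pr_other pr_prop(1) by auto


lemma endo_natmul_on: "endo_on G (natmul n)"
  unfolding endo_on_def using subgrp_natmul[OF G] natmul_plus by blast

lemma torsion_subgrp: "subgrp (torsion_part G)"
proof -
  have "x + y \<in> torsion_part G" if xy: "x \<in> torsion_part G" "y \<in> torsion_part G" for x y
  proof -
    obtain m where m: "m > 0" "natmul m x = 0" "x \<in> G" using xy(1) unfolding torsion_part_def by auto
    obtain n where n: "n > 0" "natmul n y = 0" "y \<in> G" using xy(2) unfolding torsion_part_def by auto
    have "natmul (m * n) (x + y) = natmul n (natmul m x) + natmul m (natmul n y)"
      by (simp add: natmul_plus natmul_mult[symmetric] mult.commute)
    then have "natmul (m * n) (x + y) = 0" using m(2) n(2) by simp
    moreover have "m * n > 0" using m n by simp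
    ultimately show ?thesis using m n subgrp_add[OF G] unfolding torsion_part_def by blast
  qed
  moreover have "- x \<in> torsion_part G" if "x \<in> torsion_part G" for x
    using that subgrp_neg[OF G] unfolding torsion_part_def by (auto simp: natmul_minus)
  moreover have "0 \<in> torsion_part G" unfolding torsion_part_def using subgrp_0[OF G]
    by (auto intro!: exI[of _ 1])
  ultimately show ?thesis unfolding subgrp_def by blast
qed

lemma torsion_sub: "torsion_part G \<subseteq> G" unfolding torsion_part_def by auto

lemma glue: assumes t: "\<And>p. prime p \<Longrightarrow> t p \<in> ptors p G"
  shows "\<exists>g\<in>G. \<forall>p. prime p \<longrightarrow> pr p g = t p"
proof -
  define s where "s n = sum t {q. prime q \<and> q \<le> n}" for n
  have fin: "finite {q. prime q \<and> q \<le> n}" for n :: nat by (rule finite_subset[of _ "{..n}"]) auto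
  have tG: "prime q \<Longrightarrow> t q \<in> G" for q using t ptors_sub by blast
  have sG: "s n \<in> G" for n unfolding s_def by (rule subgrp_sum[OF G]) (auto intro: tG)
  have cover: "\<exists>n. d dvd NN Suc n" if "d > 0" for d
  proof -
    have "Suc (d - 1) dvd prod Suc {..<d}" by (rule dvd_prodI) (use that in auto)
    then show ?thesis using that unfolding NN_def by (intro exI[of _ d]) simp
  qed
  have sd: "s (Suc n) - s n \<in> mul_set (NN Suc n) G" for n
  proof (cases "prime (Suc n)")
    case True
    have eq: "{q. prime q \<and> q \<le> Suc n} = insert (Suc n) {q. prime q \<and> q \<le> n}" using True by (auto simp: le_Suc_eq)
    have "s (Suc n) = t (Suc n) + s n" unfolding s_def eq by (subst sum.insert) (auto simp: fin)
    then have d: "s (Suc n) - s n = t (Suc n)" by simp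
    have "\<not> Suc n dvd NN Suc n"
    proof
      assume "Suc n dvd NN Suc n"
      then obtain i where "i < n" "Suc n dvd Suc i" using prime_dvd_prod_iff[OF _ True] unfolding NN_def by auto
      then show False using dvd_imp_le[of "Suc n" "Suc i"] by simp
    qed
    then have "coprime (Suc n) (NN Suc n)" by (rule prime_imp_coprime[OF True])
    then have "coprime (NN Suc n) (Suc n)" using coprime_commute by blast
    then show ?thesis unfolding d using ptors_in_mul_set[OF True G t[OF True]] by blast
  next
    case False
    have eq: "{q. prime q \<and> q \<le> Suc n} = {q. prime q \<and> q \<le> n}" using False by (auto simp: le_Suc_eq)
    show ?thesis unfolding s_def eq using subgrp_0[OF mul_set_subgrp[OF G]] by simp
  qed
  obtain g where g: "g \<in> G" "\<And>n. g - s n \<in> mul_set (NN Suc n) G"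
    using GL[OF G ext _ cover sG sd] by auto
  have "pr p g = t p" if p: "prime p" for p
  proof -
    define n0 where "n0 = p ^ kk p + p"
    have pos: "p ^ kk p > 0" using p prime_gt_0_nat by simp
    have "Suc (p ^ kk p - 1) dvd prod Suc {..<n0}" by (rule dvd_prodI) (use pos in \<open>auto simp: n0_def\<close>)
    then have "p ^ kk p dvd NN Suc n0" using pos unfolding NN_def by simp
    then have "g - s n0 \<in> mul_set (p ^ kk p) G" using g(2) mul_set_dvd[OF G] by blast
    then have "pr p (g - s n0) = 0" using pr_zero[OF p] by blast
    then have "pr p g = pr p (s n0)" using pr_diff[OF p g(1) sG] by simp
    also have "\<dots> = (\<Sum>q\<in>{q. prime q \<and> q \<le> n0}. pr p (t q))" unfolding s_def by (rule pr_sum[OF p]) (auto intro: tG)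
    also have "\<dots> = (\<Sum>q\<in>{q. prime q \<and> q \<le> n0}. if p = q then t q else 0)"
      by (rule sum.cong) (auto simp: pr_ptors[OF p] pr_other[OF p] t)
    also have "\<dots> = t p" using p fin[of n0] by (simp add: n0_def)
    finally show ?thesis .
  qed
  then show ?thesis using g(1) by blast
qed

lemma tdec: assumes x: "x \<in> torsion_part G"
  shows "\<exists>P. finite P \<and> (\<forall>p\<in>P. prime p) \<and> (\<forall>p. prime p \<longrightarrow> p \<notin> P \<longrightarrow> pr p x = 0) \<and> x = (\<Sum>p\<in>P. pr p x)"
proof -
  obtain n where n: "n > 0" "natmul n x = 0" and xG: "x \<in> G" using x unfolding torsion_part_def by auto
  define P where "P = {q. prime q \<and> q dvd n}"
  have "P \<subseteq> {..n}" unfolding P_def using n(1) dvd_imp_le by blast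
  then have fin: "finite P" by (rule finite_subset) simp
  have z: "pr p x = 0" if p: "prime p" "p \<notin> P" for p
  proof -
    have y: "pr p x \<in> ptors p G" using pr_prop(1)[OF p(1) xG] .
    then obtain j where j: "natmul (p ^ j) (pr p x) = 0" unfolding ptors_def by auto
    have "natmul n (pr p x) = pr p (natmul n x)" using pr_endo[OF p(1) endo_natmul_on xG] by simp
    also have "\<dots> = 0" using n(2) pr_zero[OF p(1)] subgrp_0[OF mul_set_subgrp[OF G]] by simp
    finally have nz: "natmul n (pr p x) = 0" .
    have "\<not> p dvd n" using p unfolding P_def by auto
    then have "coprime n (p ^ j)" using prime_imp_coprime[OF p(1)] by (simp add: coprime_commute)
    then obtain u where "natmul n (natmul u (pr p x)) = pr p x" using CD[OF j] by blast
    then have "pr p x = natmul u (natmul n (pr p x))" by (metis natmul_comm)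
    then show ?thesis using nz by simp
  qed
  have PG: "\<And>q. q \<in> P \<Longrightarrow> pr q x \<in> G" using pr_G xG unfolding P_def by auto
  have "x = (\<Sum>q\<in>P. pr q x)"
  proof (rule pr_eqI[OF xG subgrp_sum[OF G PG]])
    fix p :: nat assume p: "prime p"
    have "pr p (\<Sum>q\<in>P. pr q x) = (\<Sum>q\<in>P. pr p (pr q x))" by (rule pr_sum[OF p PG])
    also have "\<dots> = (\<Sum>q\<in>P. if p = q then pr q x else 0)"
      by (rule sum.cong[OF refl]) (simp add: pr_pr[OF p _ xG] P_def)
    also have "\<dots> = pr p x" by (cases "p \<in> P") (simp_all add: fin z[OF p])
    finally show "pr p x = pr p (\<Sum>q\<in>P. pr q x)" by simp
  qed
  then show ?thesis using fin z unfolding P_def by blast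
qed


lemma endo_T: "endo_on G f \<Longrightarrow> endo_on (torsion_part G) f"
proof -
  assume f: "endo_on G f"
  have "f x \<in> torsion_part G" if x: "x \<in> torsion_part G" for x
  proof -
    obtain n where n: "n > 0" "natmul n x = 0" "x \<in> G" using x unfolding torsion_part_def by auto
    have "natmul n (f x) = 0" using endo_natmul[OF G f n(3), of n] n(2) endo_0[OF G f] by simp
    then show ?thesis using n endo_in[OF f n(3)] unfolding torsion_part_def by blast
  qed
  then show ?thesis using f torsion_sub unfolding endo_on_def by blast
qed

lemma endo_ptors: assumes f: "endo_on (torsion_part G) f" and p: "prime p" and t: "t \<in> ptors p G"
  shows "f t \<in> ptors p G"
proof -
  have tT: "t \<in> torsion_part G" using t ptors_torsion[OF p] by blast
  obtain j where j: "natmul (p ^ j) t = 0" using t unfolding ptors_def by auto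
  have "natmul (p ^ j) (f t) = 0"
    using endo_natmul[OF torsion_subgrp f tT, of "p ^ j"] j endo_0[OF torsion_subgrp f] by simp
  then show ?thesis using endo_in[OF f tT] torsion_sub unfolding ptors_def by blast
qed

lemma pr_endoT: assumes f: "endo_on (torsion_part G) f" and p: "prime p" and t: "t \<in> torsion_part G"
  shows "pr p (f t) = f (pr p t)"
proof -
  obtain P where P: "finite P" "\<forall>q\<in>P. prime q" "\<And>q. prime q \<Longrightarrow> q \<notin> P \<Longrightarrow> pr q t = 0"
    "t = (\<Sum>q\<in>P. pr q t)" using tdec[OF t] by blast
  have tG: "t \<in> G" using t torsion_sub by blast
  have pT: "q \<in> P \<Longrightarrow> pr q t \<in> torsion_part G" for q
    using pr_prop(1)[OF _ tG] ptors_torsion P(2) by blast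
  have pP: "q \<in> P \<Longrightarrow> f (pr q t) \<in> ptors q G" for q
    using endo_ptors[OF f] pr_prop(1)[OF _ tG] P(2) by blast
  have "f t = (\<Sum>q\<in>P. f (pr q t))" by (subst P(4)) (rule endo_sum[OF torsion_subgrp f pT])
  then have "pr p (f t) = (\<Sum>q\<in>P. pr p (f (pr q t)))"
    using pr_sum[OF p, of P "\<lambda>q. f (pr q t)"] pP ptors_sub by auto
  also have "\<dots> = (\<Sum>q\<in>P. if p = q then f (pr q t) else 0)"
    by (rule sum.cong[OF refl]) (use pP P(2) in \<open>auto simp: pr_ptors[OF p] pr_other[OF p]\<close>)
  also have "\<dots> = f (pr p t)"
  proof (cases "p \<in> P")
    case True then show ?thesis using P(1) by simp
  next
    case False then show ?thesis using P(1) P(3)[OF p] endo_0[OF torsion_subgrp f] by simp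
  qed
  finally show ?thesis .
qed

lemma dirA: assumes sT: "strongly_coHopfian (torsion_part G)" shows "strongly_coHopfian G"
  unfolding strongly_coHopfian_def
proof (intro allI impI)
  fix f assume f: "endo_on G f"
  obtain N where N: "(f ^^ N) ` torsion_part G = (f ^^ Suc N) ` torsion_part G"
    using sT endo_T[OF f] unfolding strongly_coHopfian_def by blast
  have fN: "endo_on G (f ^^ n)" for n using endo_pow[OF f] .
  have "(f ^^ Suc N) ` G \<subseteq> (f ^^ N) ` G"
  proof
    fix x assume "x \<in> (f ^^ Suc N) ` G"
    then obtain g where gg: "g \<in> G" "x = (f ^^ Suc N) g" by auto
    then have "x = (f ^^ N) (f g)" by (simp only: funpow_Suc_right comp_def)
    with gg(1) show "x \<in> (f ^^ N) ` G" using endo_in[OF f] by blast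
  qed
  moreover have "(f ^^ N) ` G \<subseteq> (f ^^ Suc N) ` G"
  proof
    fix x assume "x \<in> (f ^^ N) ` G"
    then obtain g where g: "g \<in> G" "x = (f ^^ N) g" by auto
    have xG: "x \<in> G" using g endo_in[OF fN] by blast
    have "\<exists>y. y \<in> ptors p G \<and> pr p x = (f ^^ Suc N) y" if p: "prime p" for p
    proof -
      have "pr p x = (f ^^ N) (pr p g)" using pr_endo[OF p fN g(1)] g(2) by simp
      moreover have "pr p g \<in> torsion_part G" using pr_prop(1)[OF p g(1)] ptors_torsion[OF p] by blast
      ultimately have "pr p x \<in> (f ^^ Suc N) ` torsion_part G" using N by blast
      then obtain t where t: "t \<in> torsion_part G" "pr p x = (f ^^ Suc N) t" by auto
      have tG: "t \<in> G" using t torsion_sub by blast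
      have "pr p x = pr p (pr p x)" using pr_ptors[OF p pr_prop(1)[OF p xG]] by simp
      also have "\<dots> = (f ^^ Suc N) (pr p t)" using t(2) pr_endo[OF p fN tG, of "Suc N"] by simp
      finally show ?thesis using pr_prop(1)[OF p tG] by blast
    qed
    then obtain y where y: "\<And>p. prime p \<Longrightarrow> y p \<in> ptors p G \<and> pr p x = (f ^^ Suc N) (y p)" by metis
    obtain h where h: "h \<in> G" "\<And>p. prime p \<Longrightarrow> pr p h = y p" using glue[of y] y by blast
    have "(f ^^ Suc N) h = x"
    proof (rule pr_eqI[OF endo_in[OF fN h(1)] xG])
      fix p :: nat assume p: "prime p"
      show "pr p ((f ^^ Suc N) h) = pr p x" using pr_endo[OF p fN h(1), of "Suc N"] h(2)[OF p] y[OF p] by simp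
    qed
    then show "x \<in> (f ^^ Suc N) ` G" using h(1) by blast
  qed
  ultimately show "\<exists>n. (f ^^ n) ` G = (f ^^ Suc n) ` G" by blast
qed

lemma dirB: assumes sG: "strongly_coHopfian G" shows "strongly_coHopfian (torsion_part G)"
  unfolding strongly_coHopfian_def
proof (intro allI impI)
  fix f assume f: "endo_on (torsion_part G) f"
  define T where "T = torsion_part G"
  have fT: "endo_on T f" using f T_def by simp
  have TG: "T \<subseteq> G" unfolding T_def by (rule torsion_sub)
  have sT: "subgrp T" unfolding T_def by (rule torsion_subgrp)
  have ex: "\<exists>h. h \<in> G \<and> (\<forall>p. prime p \<longrightarrow> pr p h = f (pr p g))" if g: "g \<in> G" for g
  proof -
    have "\<And>p. prime p \<Longrightarrow> f (pr p g) \<in> ptors p G" using endo_ptors[OF f] pr_prop(1)[OF _ g] by blast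
    then obtain h where "h \<in> G" "\<forall>p. prime p \<longrightarrow> pr p h = f (pr p g)" using glue[of "\<lambda>p. f (pr p g)"] by blast
    then show ?thesis by blast
  qed
  define F where "F g = (SOME h. h \<in> G \<and> (\<forall>p. prime p \<longrightarrow> pr p h = f (pr p g)))" for g
  have F: "F g \<in> G \<and> (\<forall>p. prime p \<longrightarrow> pr p (F g) = f (pr p g))" if "g \<in> G" for g
    unfolding F_def using someI_ex[OF ex[OF that]] .
  have prT: "prime p \<Longrightarrow> g \<in> G \<Longrightarrow> pr p g \<in> T" for p g
    using pr_prop(1) ptors_torsion unfolding T_def by blast
  have Fendo: "endo_on G F" unfolding endo_on_def
  proof (intro conjI ballI)
    show "F ` G \<subseteq> G" using F by blast
    fix x y assume x: "x \<in> G" and y: "y \<in> G"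
    show "F (x + y) = F x + F y"
    proof (rule pr_eqI)
      show "F (x + y) \<in> G" using F subgrp_add[OF G x y] by blast
      show "F x + F y \<in> G" using F x y subgrp_add[OF G] by blast
      fix p :: nat assume p: "prime p"
      have "pr p (F (x + y)) = f (pr p x + pr p y)" using F[OF subgrp_add[OF G x y]] pr_add[OF p x y] p by simp
      also have "\<dots> = f (pr p x) + f (pr p y)" using endo_add[OF fT prT[OF p x] prT[OF p y]] .
      also have "\<dots> = pr p (F x + F y)" using F[OF x] F[OF y] pr_add[OF p] p by simp
      finally show "pr p (F (x + y)) = pr p (F x + F y)" .
    qed
  qed
  obtain N where N: "(F ^^ N) ` G = (F ^^ Suc N) ` G" using sG Fendo unfolding strongly_coHopfian_def by blast
  have FN: "endo_on G (F ^^ n)" for n using endo_pow[OF Fendo] .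
  have fN: "endo_on T (f ^^ n)" for n using endo_pow[OF fT] .
  have prF: "pr p ((F ^^ n) g) = (f ^^ n) (pr p g)" if p: "prime p" and g: "g \<in> G" for p n g
  proof (induction n)
    case 0 then show ?case by simp
  next
    case (Suc n)
    have "(F ^^ n) g \<in> G" using endo_in[OF FN g] .
    then show ?case using F[OF \<open>(F ^^ n) g \<in> G\<close>] Suc.IH p by simp
  qed
  have FT: "F t = f t" if t: "t \<in> T" for t
  proof (rule pr_eqI)
    show "F t \<in> G" using F t TG by blast
    show "f t \<in> G" using endo_in[OF fT t] TG by blast
    fix p :: nat assume p: "prime p"
    have tG: "t \<in> G" using t TG by blast
    have tT: "t \<in> torsion_part G" using t unfolding T_def .
    show "pr p (F t) = pr p (f t)" using F[OF tG] pr_endoT[OF f p tT] p by simp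
  qed
  have FTn: "(F ^^ n) t = (f ^^ n) t" if t: "t \<in> T" for t n
  proof (induction n)
    case 0 then show ?case by simp
  next
    case (Suc n)
    have "(f ^^ n) t \<in> T" using endo_in[OF fN t] .
    then show ?case using FT Suc.IH by simp
  qed
  have "(f ^^ Suc N) ` T \<subseteq> (f ^^ N) ` T"
  proof
    fix x assume "x \<in> (f ^^ Suc N) ` T"
    then obtain g where gg: "g \<in> T" "x = (f ^^ Suc N) g" by auto
    then have "x = (f ^^ N) (f g)" by (simp only: funpow_Suc_right comp_def)
    with gg(1) show "x \<in> (f ^^ N) ` T" using endo_in[OF fT] by blast
  qed
  moreover have "(f ^^ N) ` T \<subseteq> (f ^^ Suc N) ` T"
  proof
    fix x assume "x \<in> (f ^^ N) ` T"
    then obtain t where t: "t \<in> T" "x = (f ^^ N) t" by auto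
    have xT: "x \<in> T" using t endo_in[OF fN] by blast
    have "x = (F ^^ N) t" using t FTn by simp
    then have "x \<in> (F ^^ N) ` G" using t TG by blast
    then have "x \<in> (F ^^ Suc N) ` G" unfolding N .
    then obtain g where g: "g \<in> G" "x = (F ^^ Suc N) g" by (rule imageE) simp
    have xT': "x \<in> torsion_part G" using xT unfolding T_def .
    obtain P where P: "finite P" "\<forall>q\<in>P. prime q" "x = (\<Sum>q\<in>P. pr q x)"
      using tdec[OF xT'] by (elim exE conjE) simp
    have eqq: "pr q x = (f ^^ Suc N) (pr q g)" if "q \<in> P" for q
      using prF[of q g "Suc N"] g P(2) that by simp
    have "x = (\<Sum>q\<in>P. (f ^^ Suc N) (pr q g))"
      by (subst P(3)) (rule sum.cong[OF refl eqq])
    also have "\<dots> = (f ^^ Suc N) (\<Sum>q\<in>P. pr q g)"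
    proof -
      have "\<And>q. q \<in> P \<Longrightarrow> pr q g \<in> T" using prT g P(2) by blast
      then show ?thesis using endo_sum[OF sT fN, of P "\<lambda>q. pr q g" "Suc N"] by simp
    qed
    finally have "x = (f ^^ Suc N) (\<Sum>q\<in>P. pr q g)" .
    moreover have "(\<Sum>q\<in>P. pr q g) \<in> T" by (rule subgrp_sum[OF sT]) (use prT g P(2) in blast)
    ultimately show "x \<in> (f ^^ Suc N) ` T" by blast
  qed
  ultimately show "\<exists>n. (f ^^ n) ` torsion_part G = (f ^^ Suc n) ` torsion_part G" unfolding T_def by blast
qed

end

lemma decomp:
  fixes G :: "'a::ab_group_add set"
  assumes G: "subgrp G" and ext: "Ext_Q_vanishes G" and p: "prime p" and x: "x \<in> G"
  shows "\<exists>w\<in>G. (\<forall>n. w \<in> mul_set (p ^ n) G) \<and> (\<forall>d. coprime d p \<longrightarrow> x - w \<in> mul_set d G)"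
proof -
  define r where "r i = (if coprime (Suc i) p then Suc i else 1)" for i
  define R where "R n = prod r {..<n}" for n
  define m where "m i = p * r i" for i
  have p1: "p > 1" using p prime_gt_1_nat by blast
  have rpos: "r i > 0" for i unfolding r_def by simp
  have mpos: "m i > 0" for i unfolding m_def using rpos p1 by simp
  have NNeq: "NN m n = p ^ n * R n" for n
    unfolding NN_def m_def R_def by (simp add: prod.distrib)
  have Rcop: "coprime (R n) p" for n
    unfolding R_def by (rule prod_coprime_left) (simp add: r_def)
  have Rdvd: "d dvd R n" if "coprime d p" "d \<le> n" "d > 0" for d n
  proof -
    have "r (d - 1) dvd R n" unfolding R_def by (rule dvd_prodI) (use that in auto)
    moreover have "r (d - 1) = d" unfolding r_def using that by simp
    ultimately show ?thesis by simp
  qed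
  have Rmono: "R n dvd R n'" if "n \<le> n'" for n n'
    unfolding R_def by (rule prod_dvd_prod_subset) (use that in auto)
  have cover: "\<exists>n. d dvd NN m n" if dpos: "d > 0" for d
  proof -
    obtain d' where d': "d = p ^ multiplicity p d * d'" "\<not> p dvd d'"
      using multiplicity_decompose'[of d p] dpos p by (metis not_prime_unit neq0_conv)
    define a where "a = multiplicity p d"
    have "d' > 0" using d' dpos by (auto intro!: Nat.gr0I)
    have "coprime d' p" using prime_imp_coprime[OF p d'(2)] coprime_commute by blast
    then have "d' dvd R (a + d')" using Rdvd \<open>d' > 0\<close> by simp
    moreover have "p ^ a dvd p ^ (a + d')" by (simp add: le_imp_power_dvd)
    ultimately have "p ^ a * d' dvd NN m (a + d')" unfolding NNeq by (simp add: mult_dvd_mono)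
    then have "d dvd NN m (a + d')" using d'(1) unfolding a_def by metis
    then show ?thesis by blast
  qed
  have eps_ex: "\<exists>e. p ^ n dvd e \<and> R n dvd e - 1 \<and> e \<ge> 1" for n
  proof -
    have "p ^ n \<noteq> 0" using p1 by simp
    then obtain a b where ab: "p ^ n * a = R n * b + gcd (p ^ n) (R n)" using bezout_nat by blast
    have "gcd (p ^ n) (R n) = 1" using Rcop[of n] by (simp add: coprime_commute)
    then have ab': "p ^ n * a = R n * b + 1" using ab by simp
    have "p ^ n dvd p ^ n * a" by simp
    moreover have "R n dvd p ^ n * a - 1" using ab' by simp
    moreover have "p ^ n * a \<ge> 1" using ab' by simp
    ultimately show ?thesis by blast
  qed
  then obtain eps where eps: "\<And>n. p ^ n dvd eps n" "\<And>n. R n dvd eps n - 1" "\<And>n. eps n \<ge> 1" by metis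
  define s where "s n = natmul (eps n) x" for n
  have sG: "s n \<in> G" for n unfolding s_def using subgrp_natmul[OF G x] .
  have ND: "NN m n dvd D" if "p ^ n dvd D" "R n dvd D" for n D
  proof -
    have "coprime (p ^ n) (R n)" using Rcop[of n] by (simp add: coprime_commute)
    then show ?thesis unfolding NNeq using that divides_mult by blast
  qed
  have dv1: "p ^ n dvd eps (Suc n)" for n using eps(1)[of "Suc n"] by (meson dvd_trans le_imp_power_dvd le_SucI order_refl)
  have dv2: "R n dvd eps (Suc n) - 1" for n using eps(2)[of "Suc n"] Rmono[of n "Suc n"] by (meson dvd_trans le_SucI order_refl)
  have sd: "s (Suc n) - s n \<in> mul_set (NN m n) G" for n
  proof (cases "eps n \<le> eps (Suc n)")
    case True
    define D where "D = eps (Suc n) - eps n"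
    have "p ^ n dvd D" unfolding D_def by (rule dvd_diff_nat[OF dv1 eps(1)])
    moreover have "R n dvd D"
    proof -
      have "D = (eps (Suc n) - 1) - (eps n - 1)" unfolding D_def using eps(3)[of n] by simp
      then show ?thesis using dvd_diff_nat[OF dv2[of n] eps(2)[of n]] by simp
    qed
    ultimately have ND': "NN m n dvd D" by (rule ND)
    have "s (Suc n) = natmul D x + s n" unfolding s_def D_def
      using natmul_add[of "eps (Suc n) - eps n" "eps n" x] True by simp
    then have "s (Suc n) - s n = natmul D x" by simp
    then show ?thesis using subsetD[OF mul_set_dvd[OF G ND'] mul_set_in[OF x]] by simp
  next
    case False
    define D where "D = eps n - eps (Suc n)"
    have "p ^ n dvd D" unfolding D_def by (rule dvd_diff_nat[OF eps(1) dv1])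
    moreover have "R n dvd D"
    proof -
      have "D = (eps n - 1) - (eps (Suc n) - 1)" unfolding D_def using eps(3)[of "Suc n"] by simp
      then show ?thesis using dvd_diff_nat[OF eps(2)[of n] dv2[of n]] by simp
    qed
    ultimately have ND': "NN m n dvd D" by (rule ND)
    have A: "natmul D x \<in> mul_set (NN m n) G" using subsetD[OF mul_set_dvd[OF G ND'] mul_set_in[OF x]] .
    have "s n = natmul D x + s (Suc n)" unfolding s_def D_def
      using natmul_add[of "eps n - eps (Suc n)" "eps (Suc n)" x] False by simp
    then have "s (Suc n) - s n = - natmul D x" by simp
    then show ?thesis using subgrp_neg[OF mul_set_subgrp[OF G] A] by simp
  qed
  obtain w where w: "w \<in> G" "\<And>n. w - s n \<in> mul_set (NN m n) G"
    using GL[OF G ext mpos cover sG sd] by blast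
  have "w \<in> mul_set (p ^ n) G" for n
  proof -
    have pd: "p ^ n dvd NN m n" unfolding NNeq by simp
    have A: "w - s n \<in> mul_set (p ^ n) G" using subsetD[OF mul_set_dvd[OF G pd] w(2)[of n]] .
    have B: "s n \<in> mul_set (p ^ n) G" unfolding s_def
      by (rule subsetD[OF mul_set_dvd[OF G eps(1)[of n]]]) (rule mul_set_in[OF x])
    have "w = (w - s n) + s n" by simp
    then show ?thesis using subgrp_add[OF mul_set_subgrp[OF G] A B] by simp
  qed
  moreover have "x - w \<in> mul_set d G" if d: "coprime d p" for d
  proof -
    have d0: "d > 0" using d p1 by (cases "d = 0") auto
    have dR: "d dvd R d" using Rdvd[OF d _ d0] by simp
    have dN: "d dvd NN m d" unfolding NNeq using dR by simp
    have A: "w - s d \<in> mul_set d G" using subsetD[OF mul_set_dvd[OF G dN] w(2)[of d]] .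
    have "x - s d = - natmul (eps d - 1) x"
      unfolding s_def using natmul_add[of "eps d - 1" 1 x] eps(3)[of d] by simp
    moreover have "natmul (eps d - 1) x \<in> mul_set d G"
      by (rule subsetD[OF mul_set_dvd[OF G dvd_trans[OF dR eps(2)[of d]]]]) (rule mul_set_in[OF x])
    ultimately have B: "x - s d \<in> mul_set d G" using subgrp_neg[OF mul_set_subgrp[OF G]] by simp
    have "x - w = (x - s d) - (w - s d)" by simp
    then show ?thesis using subgrp_diff[OF mul_set_subgrp[OF G] B A] by simp
  qed
  ultimately show ?thesis using w(1) by blast
qed

definition sumset :: "'a::ab_group_add set \<Rightarrow> 'a set \<Rightarrow> 'a set" where
  "sumset A B = {a + b | a b. a \<in> A \<and> b \<in> B}"

lemma sumset_subgrp: assumes A: "subgrp A" and B: "subgrp B" shows "subgrp (sumset A B)"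
proof -
  have "0 \<in> sumset A B" unfolding sumset_def using subgrp_0[OF A] subgrp_0[OF B] by force
  moreover have "x + y \<in> sumset A B" if xy: "x \<in> sumset A B" "y \<in> sumset A B" for x y
  proof -
    obtain a b where ab: "a \<in> A" "b \<in> B" "x = a + b" using xy(1) unfolding sumset_def by auto
    obtain a' b' where ab': "a' \<in> A" "b' \<in> B" "y = a' + b'" using xy(2) unfolding sumset_def by auto
    have "x + y = (a + a') + (b + b')" using ab ab' by (simp add: algebra_simps)
    then show ?thesis unfolding sumset_def using subgrp_add[OF A ab(1) ab'(1)] subgrp_add[OF B ab(2) ab'(2)] by blast
  qed
  moreover have "- x \<in> sumset A B" if xx: "x \<in> sumset A B" for x
  proof -
    obtain a b where ab: "a \<in> A" "b \<in> B" "x = a + b" using xx unfolding sumset_def by auto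
    have "- x = (- a) + (- b)" using ab by simp
    then show ?thesis unfolding sumset_def using subgrp_neg[OF A ab(1)] subgrp_neg[OF B ab(2)] by blast
  qed
  ultimately show ?thesis unfolding subgrp_def by blast
qed

lemma sumset_in: "a \<in> A \<Longrightarrow> b \<in> B \<Longrightarrow> a + b \<in> sumset A B"
  unfolding sumset_def by blast

lemma mul_set_1[simp]: "mul_set (Suc 0) G = G" unfolding mul_set_def by simp

lemma purity: assumes t: "t \<in> ptors p G" and tm: "t \<in> mul_set (p ^ j) G"
  shows "t \<in> mul_set (p ^ j) (ptors p G)"
proof -
  obtain g where g: "g \<in> G" "t = natmul (p ^ j) g" using tm unfolding mul_set_def by auto
  then have "g \<in> ptors p G" using ptors_back[of g G p j] t by simp
  then show ?thesis using g(2) unfolding mul_set_def by blast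
qed

lemma retraction:
  fixes G :: "'a::ab_group_add set"
  assumes G: "subgrp G" and p: "prime p" and bnd: "\<forall>t\<in>ptors p G. natmul (p ^ k) t = 0"
  shows "\<exists>K. subgrp K \<and> K \<subseteq> G \<and> (\<forall>t\<in>ptors p G. t \<in> K \<longrightarrow> t = 0) \<and> (\<forall>x\<in>G. \<exists>t\<in>ptors p G. \<exists>c\<in>K. x = t + c)"
proof -
  define P where "P = ptors p G"
  have sP: "subgrp P" unfolding P_def using ptors_subgrp[OF G] .
  have PG: "P \<subseteq> G" unfolding P_def by (rule ptors_sub)
  define hc where "hc K \<longleftrightarrow> (\<forall>t\<in>P. \<forall>c\<in>K. \<forall>j. t + c \<in> mul_set (p ^ j) G \<longrightarrow> t \<in> mul_set (p ^ j) P)" for K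
  define KS where "KS = {K. subgrp K \<and> K \<subseteq> G \<and> mul_set (p ^ k) G \<subseteq> K \<and> hc K}"
  have msG: "subgrp (mul_set n G)" for n using mul_set_subgrp[OF G] .
  have K0: "mul_set (p ^ k) G \<in> KS"
  proof -
    have "hc (mul_set (p ^ k) G)" unfolding hc_def
    proof (intro ballI allI impI)
      fix t c j assume t: "t \<in> P" and c: "c \<in> mul_set (p ^ k) G" and tc: "t + c \<in> mul_set (p ^ j) G"
      show "t \<in> mul_set (p ^ j) P"
      proof (cases "j \<le> k")
        case True
        have cj: "c \<in> mul_set (p ^ j) G" using subsetD[OF mul_set_dvd[OF G le_imp_power_dvd[OF True]] c] .
        have "t \<in> mul_set (p ^ j) G" using subgrp_diff[OF msG tc cj] by simp
        then show ?thesis using purity t unfolding P_def by blast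
      next
        case False
        have "t + c \<in> mul_set (p ^ k) G" using subsetD[OF mul_set_dvd[OF G le_imp_power_dvd] tc] False by simp
        then have "t \<in> mul_set (p ^ k) G" using subgrp_diff[OF msG _ c, of "t + c"] by simp
        then have "t = 0" using ptors_inter0[OF G _ _ bnd] t unfolding P_def by blast
        then show ?thesis using subgrp_0[OF mul_set_subgrp[OF sP]] by simp
      qed
    qed
    then show ?thesis unfolding KS_def using msG mul_set_sub[OF G] by blast
  qed
  have "\<exists>M\<in>KS. \<forall>X\<in>KS. M \<subseteq> X \<longrightarrow> X = M"
  proof (rule Zorn_Lemma2, intro ballI)
    fix C assume C: "C \<in> chains KS"
    then have CK: "C \<subseteq> KS" and ch: "\<forall>A\<in>C. \<forall>B\<in>C. A \<subseteq> B \<or> B \<subseteq> A"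
      unfolding chains_def chain_subset_def by auto
    show "\<exists>U\<in>KS. \<forall>X\<in>C. X \<subseteq> U"
    proof (cases "C = {}")
      case True then show ?thesis using K0 by blast
    next
      case False
      define U where "U = \<Union>C"
      have "subgrp U" unfolding subgrp_def
      proof (intro conjI ballI)
        obtain A where "A \<in> C" using False by blast
        then show "0 \<in> U" unfolding U_def using CK subgrp_0 unfolding KS_def by blast
      next
        fix x y assume "x \<in> U" "y \<in> U"
        then obtain A B where AB: "A \<in> C" "B \<in> C" "x \<in> A" "y \<in> B" unfolding U_def by blast
        then have "A \<subseteq> B \<or> B \<subseteq> A" using ch by blast
        then show "x + y \<in> U"
        proof
          assume "A \<subseteq> B" then show ?thesis using AB CK subgrp_add unfolding KS_def U_def by blast
        next
          assume "B \<subseteq> A" then show ?thesis using AB CK subgrp_add unfolding KS_def U_def by blast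
        qed
      next
        fix x assume "x \<in> U"
        then obtain A where "A \<in> C" "x \<in> A" unfolding U_def by blast
        then show "- x \<in> U" using CK subgrp_neg unfolding KS_def U_def by blast
      qed
      moreover have "U \<subseteq> G" unfolding U_def using CK unfolding KS_def by blast
      moreover have "mul_set (p ^ k) G \<subseteq> U" unfolding U_def using CK False unfolding KS_def by blast
      moreover have "hc U" unfolding hc_def U_def
      proof (intro ballI allI impI)
        fix t c j assume "t \<in> P" "c \<in> \<Union>C" "t + c \<in> mul_set (p ^ j) G"
        then obtain A where "A \<in> C" "c \<in> A" by blast
        then have "hc A" using CK unfolding KS_def by blast
        then show "t \<in> mul_set (p ^ j) P" using \<open>t \<in> P\<close> \<open>c \<in> A\<close> \<open>t + c \<in> mul_set (p ^ j) G\<close> unfolding hc_def by blast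
      qed
      ultimately have "U \<in> KS" unfolding KS_def by blast
      then show ?thesis unfolding U_def by blast
    qed
  qed
  then obtain M where M: "M \<in> KS" and Mmax: "\<And>X. X \<in> KS \<Longrightarrow> M \<subseteq> X \<Longrightarrow> X = M" by blast
  have sM: "subgrp M" and MG: "M \<subseteq> G" and kM: "mul_set (p ^ k) G \<subseteq> M" and hM: "hc M"
    using M unfolding KS_def by auto
  define S where "S = sumset P M"
  have sS: "subgrp S" unfolding S_def by (rule sumset_subgrp[OF sP sM])
  have PS: "P \<subseteq> S" unfolding S_def using sumset_in[of _ P 0 M] subgrp_0[OF sM] by auto
  have MS: "M \<subseteq> S" unfolding S_def using sumset_in[of 0 P _ M] subgrp_0[OF sP] by force
  have GS: "G \<subseteq> S"
  proof (rule ccontr)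
    assume "\<not> G \<subseteq> S"
    then obtain x0 where x0: "x0 \<in> G" "x0 \<notin> S" by blast
    have step: "\<forall>x\<in>G. natmul (p ^ i) x \<in> S \<longrightarrow> x \<notin> S \<longrightarrow> (\<exists>y\<in>G. y \<notin> S \<and> natmul p y \<in> S)" for i
    proof (induction i)
      case 0 then show ?case by simp
    next
      case (Suc i)
      show ?case
      proof (intro ballI impI)
        fix x assume x: "x \<in> G" "natmul (p ^ Suc i) x \<in> S" "x \<notin> S"
        show "\<exists>y\<in>G. y \<notin> S \<and> natmul p y \<in> S"
        proof (cases "natmul p x \<in> S")
          case True then show ?thesis using x by blast
        next
          case False
          have "natmul (p ^ Suc i) x = natmul (p ^ i) (natmul p x)" by (simp only: power_Suc2 natmul_mult)
          then have "natmul (p ^ i) (natmul p x) \<in> S" using x(2) by simp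
          then show ?thesis using Suc.IH[rule_format, OF subgrp_natmul[OF G x(1)] _ False] by blast
        qed
      qed
    qed
    have "natmul (p ^ k) x0 \<in> S" using kM MS mul_set_in[OF x0(1)] by blast
    then obtain x1 where x1: "x1 \<in> G" "x1 \<notin> S" "natmul p x1 \<in> S" using step[of k, rule_format, OF x0(1) _ x0(2)] by blast
    define H where "H = {j. j \<le> k \<and> (\<exists>z\<in>S. x1 + z \<in> mul_set (p ^ j) G)}"
    have finH: "finite H" unfolding H_def by simp
    have "x1 + 0 \<in> mul_set (p ^ 0) G" using x1(1) by simp
    then have "0 \<in> H" unfolding H_def using subgrp_0[OF sS] by blast
    define h where "h = Max H"
    have hH: "h \<in> H" unfolding h_def using finH \<open>0 \<in> H\<close> by (intro Max_in) auto
    have hmax: "j \<le> h" if "j \<in> H" for j unfolding h_def using finH that by simp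
    obtain z where z: "z \<in> S" "x1 + z \<in> mul_set (p ^ h) G" and hk: "h \<le> k" using hH unfolding H_def by blast
    have hk': "h < k"
    proof (rule ccontr)
      assume "\<not> h < k"
      then have "h = k" using hk by simp
      then have "x1 + z \<in> S" using z(2) kM MS by blast
      then have "x1 \<in> S" using subgrp_diff[OF sS _ z(1), of "x1 + z"] by simp
      then show False using x1(2) by blast
    qed
    define x2 where "x2 = x1 + z"
    have x2G: "x2 \<in> G" unfolding x2_def using subsetD[OF mul_set_sub[OF G] z(2)] .
    have x2S: "x2 \<notin> S"
    proof
      assume "x2 \<in> S"
      then have "x2 - z \<in> S" using subgrp_diff[OF sS _ z(1)] by blast
      then show False using x1(2) unfolding x2_def by simp
    qed
    have px2: "natmul p x2 \<in> S" unfolding x2_def natmul_plus using subgrp_add[OF sS x1(3) subgrp_natmul[OF sS z(1)]] .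
    have x2h: "x2 \<in> mul_set (p ^ h) G" unfolding x2_def using z(2) .
    have max2: "j \<le> h" if "z' \<in> S" "j \<le> k" "x2 + z' \<in> mul_set (p ^ j) G" for z' j
    proof -
      have "z + z' \<in> S" using subgrp_add[OF sS z(1) that(1)] .
      moreover have "x1 + (z + z') = x2 + z'" unfolding x2_def by (simp add: add.assoc)
      then have "x1 + (z + z') \<in> mul_set (p ^ j) G" using that(3) by metis
      ultimately have "j \<in> H" unfolding H_def using that(2) by blast
      then show ?thesis by (rule hmax)
    qed
    obtain t c where tc: "t \<in> P" "c \<in> M" "natmul p x2 = t + c" using px2 unfolding S_def sumset_def by blast
    obtain g2 where g2: "g2 \<in> G" "x2 = natmul (p ^ h) g2" using x2h unfolding mul_set_def by auto
    have "natmul p x2 = natmul (p ^ Suc h) g2" using g2(2) by (simp add: natmul_mult)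
    then have "t + c \<in> mul_set (p ^ Suc h) G" using tc(3) mul_set_in[OF g2(1)] by metis
    then have "t \<in> mul_set (p ^ Suc h) P" using hM tc(1,2) unfolding hc_def by blast
    then obtain s where s: "s \<in> P" "t = natmul (p ^ Suc h) s" unfolding mul_set_def by auto
    define x3 where "x3 = x2 - natmul (p ^ h) s"
    have sG: "s \<in> G" using s PG by blast
    have x3G: "x3 \<in> G" unfolding x3_def using subgrp_diff[OF G x2G subgrp_natmul[OF G sG]] .
    have phs: "natmul (p ^ h) s \<in> S" using PS subgrp_natmul[OF sP s(1)] by blast
    have x3S: "x3 \<notin> S"
    proof
      assume "x3 \<in> S"
      then have "x3 + natmul (p ^ h) s \<in> S" using subgrp_add[OF sS _ phs] by blast
      then show False using x2S unfolding x3_def by simp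
    qed
    have px3: "natmul p x3 = c"
    proof -
      have "natmul p x3 = natmul p x2 - natmul p (natmul (p ^ h) s)" unfolding x3_def by (rule natmul_diff)
      also have "natmul p (natmul (p ^ h) s) = t" using s(2) by (simp add: natmul_mult)
      finally show ?thesis using tc(3) by simp
    qed
    have x3h: "x3 \<in> mul_set (p ^ h) G" unfolding x3_def
      using subgrp_diff[OF msG x2h mul_set_in[OF sG]] .
    have max3: "j \<le> h" if "z' \<in> S" "j \<le> k" "x3 + z' \<in> mul_set (p ^ j) G" for z' j
    proof -
      have "z' - natmul (p ^ h) s \<in> S" using subgrp_diff[OF sS that(1) phs] .
      moreover have "x2 + (z' - natmul (p ^ h) s) = x3 + z'" unfolding x3_def by (simp add: algebra_simps)
      ultimately show ?thesis using max2 that by metis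
    qed
    define K' where "K' = {c' + natmul n x3 | c' n. c' \<in> M}"
    have MK': "M \<subseteq> K'"
    proof
      fix c' assume "c' \<in> M"
      then show "c' \<in> K'" unfolding K'_def by (intro CollectI exI[of _ c'] exI[of _ 0]) simp
    qed
    have x3K': "x3 \<in> K'" unfolding K'_def using subgrp_0[OF sM] by (intro CollectI exI[of _ 0] exI[of _ 1]) simp
    have pM: "natmul p x3 \<in> M" using px3 tc(2) by simp
    have K'G: "K' \<subseteq> G" unfolding K'_def using MG subgrp_add[OF G] subgrp_natmul[OF G x3G] by blast
    have sK': "subgrp K'"
    proof -
      have "0 \<in> K'" using MK' subgrp_0[OF sM] by blast
      moreover have "a + b \<in> K'" if ab: "a \<in> K'" "b \<in> K'" for a b
      proof -
        obtain c1 n1 where 1: "c1 \<in> M" "a = c1 + natmul n1 x3" using ab(1) unfolding K'_def by blast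
        obtain c2 n2 where 2: "c2 \<in> M" "b = c2 + natmul n2 x3" using ab(2) unfolding K'_def by blast
        have "a + b = (c1 + c2) + natmul (n1 + n2) x3" using 1 2 by (simp add: natmul_add algebra_simps)
        then show ?thesis unfolding K'_def using subgrp_add[OF sM 1(1) 2(1)] by blast
      qed
      moreover have "- a \<in> K'" if aa: "a \<in> K'" for a
      proof -
        obtain c1 n1 where 1: "c1 \<in> M" "a = c1 + natmul n1 x3" using aa unfolding K'_def by blast
        have e: "natmul (n1 * (p - 1)) x3 + natmul n1 x3 = natmul n1 (natmul p x3)"
          using p prime_gt_1_nat[OF p] by (simp add: natmul_add[symmetric] natmul_mult[symmetric] algebra_simps)
        have "- a = (- c1 - natmul n1 (natmul p x3)) + natmul (n1 * (p - 1)) x3"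
          using 1(2) e by (simp add: algebra_simps)
        moreover have "- c1 - natmul n1 (natmul p x3) \<in> M"
          using subgrp_diff[OF sM subgrp_neg[OF sM 1(1)] subgrp_natmul[OF sM pM]] by simp
        ultimately show ?thesis unfolding K'_def by blast
      qed
      ultimately show ?thesis unfolding subgrp_def by blast
    qed
    have hK': "hc K'" unfolding hc_def
    proof (intro ballI allI impI)
      fix t0 e j assume t0: "t0 \<in> P" and e: "e \<in> K'" and te: "t0 + e \<in> mul_set (p ^ j) G"
      obtain c0 n where c0: "c0 \<in> M" "e = c0 + natmul n x3" using e unfolding K'_def by blast
      define q where "q = n div p"
      define r where "r = n mod p"
      have nqr: "n = q * p + r" unfolding q_def r_def by simp
      define c1 where "c1 = c0 + natmul q (natmul p x3)"
      have c1M: "c1 \<in> M" unfolding c1_def using subgrp_add[OF sM c0(1) subgrp_natmul[OF sM pM]] .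
      have ee: "e = c1 + natmul r x3" unfolding c0(2) c1_def nqr
        by (simp add: natmul_add natmul_mult algebra_simps natmul_comm[of p q])
      have te': "t0 + c1 + natmul r x3 \<in> mul_set (p ^ j) G" using te ee by (simp add: add.assoc)
      show "t0 \<in> mul_set (p ^ j) P"
      proof (cases "r = 0 \<or> j \<le> h")
        case True
        have "t0 + c1 \<in> mul_set (p ^ j) G"
        proof (cases "r = 0")
          case True then show ?thesis using te' by simp
        next
          case False
          then have jh: "j \<le> h" using \<open>r = 0 \<or> j \<le> h\<close> by blast
          have rj: "natmul r x3 \<in> mul_set (p ^ j) G"
            using mul_set_natmul[OF G subsetD[OF mul_set_dvd[OF G le_imp_power_dvd[OF jh]] x3h]] .
          show ?thesis using subgrp_diff[OF msG te' rj] by simp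
        qed
        then show ?thesis using hM t0 c1M unfolding hc_def by blast
      next
        case False
        then have r0: "r > 0" "r < p" and jh: "h < j" using p prime_gt_0_nat unfolding r_def by auto
        have "coprime r p"
        proof -
          have "\<not> p dvd r" using r0 by (auto dest: dvd_imp_le)
          then show ?thesis using prime_imp_coprime[OF p] coprime_commute by blast
        qed
        then have g1: "gcd r p = 1" by simp
        obtain u v where uv: "r * u = p * v + gcd r p" using bezout_nat[of r p] r0 by auto
        have uv': "r * u = p * v + 1" using uv g1 by simp
        have y: "t0 + c1 + natmul r x3 \<in> mul_set (p ^ Suc h) G"
        proof -
          have "Suc h \<le> j" using jh by simp
          then show ?thesis using subsetD[OF mul_set_dvd[OF G le_imp_power_dvd] te'] by blast
        qed
        have "natmul u (t0 + c1 + natmul r x3) = natmul u t0 + (natmul u c1 + natmul v (natmul p x3)) + x3"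
          by (simp add: natmul_plus natmul_mult[symmetric] uv' natmul_Suc algebra_simps mult.commute)
        moreover have "natmul u t0 + (natmul u c1 + natmul v (natmul p x3)) \<in> S"
          unfolding S_def by (rule sumset_in) (use subgrp_natmul[OF sP t0] subgrp_add[OF sM subgrp_natmul[OF sM c1M] subgrp_natmul[OF sM pM]] in auto)
        ultimately have "x3 + (natmul u t0 + (natmul u c1 + natmul v (natmul p x3))) \<in> mul_set (p ^ Suc h) G"
          using mul_set_natmul[OF G y, of u] by (simp add: add.commute)
        then have "Suc h \<le> h" using max3 hk' \<open>natmul u t0 + (natmul u c1 + natmul v (natmul p x3)) \<in> S\<close> by (metis Suc_leI)
        then show ?thesis by simp
      qed
    qed
    have "K' \<in> KS" unfolding KS_def using sK' K'G kM MK' hK' by blast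
    then have "K' = M" using Mmax MK' by blast
    then have "x3 \<in> M" using x3K' by simp
    then show False using x3S MS by blast
  qed
  have "\<forall>t\<in>P. t \<in> M \<longrightarrow> t = 0"
  proof (intro ballI impI)
    fix t assume t: "t \<in> P" "t \<in> M"
    have "t + (- t) \<in> mul_set (p ^ k) G" using subgrp_0[OF msG] by simp
    then have "t \<in> mul_set (p ^ k) P" using hM t subgrp_neg[OF sM] unfolding hc_def by blast
    then obtain s where "s \<in> P" "t = natmul (p ^ k) s" unfolding mul_set_def by auto
    then show "t = 0" using bnd unfolding P_def by simp
  qed
  moreover have "\<forall>x\<in>G. \<exists>t\<in>P. \<exists>c\<in>M. x = t + c" using GS unfolding S_def sumset_def by blast
  ultimately show ?thesis using sM MG unfolding P_def by blast
qed

lemma funpow_natmul: "(natmul p ^^ n) x = natmul (p ^ n) x"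
  by (induction n) (simp_all add: natmul_mult)

lemma image_funpow_natmul: "(natmul p ^^ n) ` H = mul_set (p ^ n) H"
  unfolding mul_set_def funpow_natmul by simp

lemma mul_set_mult_eq: "subgrp H \<Longrightarrow> mul_set (a * b) H = mul_set a (mul_set b H)"
  using mul_set_mult by blast

lemma stab:
  assumes H: "subgrp H" and N: "mul_set (p ^ N) H = mul_set (p ^ Suc N) H"
  shows "mul_set (p ^ (N + j)) H = mul_set (p ^ N) H"
proof (induction j)
  case 0 then show ?case by simp
next
  case (Suc j)
  have e1: "p ^ (N + Suc j) = p ^ j * p ^ Suc N" by (simp add: power_add mult_ac)
  have e2: "p ^ (N + j) = p ^ j * p ^ N" by (simp add: power_add mult_ac)
  have "mul_set (p ^ (N + Suc j)) H = mul_set (p ^ j) (mul_set (p ^ Suc N) H)"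
    unfolding e1 by (rule mul_set_mult_eq[OF H])
  also have "\<dots> = mul_set (p ^ j) (mul_set (p ^ N) H)" using N by simp
  also have "\<dots> = mul_set (p ^ (N + j)) H"
    unfolding e2 by (rule mul_set_mult_eq[OF H, symmetric])
  finally show ?case using Suc by simp
qed

lemma endo_natmul_gen: "subgrp H \<Longrightarrow> endo_on H (natmul n)"
  unfolding endo_on_def using subgrp_natmul natmul_plus by blast

lemma sch_stab:
  assumes H: "subgrp H" and sH: "strongly_coHopfian H"
  shows "\<exists>N. \<forall>j. mul_set (p ^ (N + j)) H = mul_set (p ^ N) H"
proof -
  obtain N where "(natmul p ^^ N) ` H = (natmul p ^^ Suc N) ` H"
    using sH endo_natmul_gen[OF H] unfolding strongly_coHopfian_def by blast
  then have "mul_set (p ^ N) H = mul_set (p ^ Suc N) H" unfolding image_funpow_natmul .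
  then show ?thesis using stab[OF H] by blast
qed

lemma S_from_G:
  fixes G :: "'a::ab_group_add set"
  assumes G: "subgrp G" and red: "reduced G" and sG: "strongly_coHopfian G" and p: "prime p"
  shows "\<exists>k. 0 < k \<and> (\<forall>t\<in>ptors p G. natmul (p ^ k) t = 0) \<and> (\<forall>x\<in>G. \<exists>t\<in>ptors p G. x - t \<in> mul_set (p ^ k) G)"
proof -
  obtain N where N: "\<And>j. mul_set (p ^ (N + j)) G = mul_set (p ^ N) G" using sch_stab[OF G sG] by blast
  define k where "k = Suc N"
  have Nk: "mul_set (p ^ (k + j)) G = mul_set (p ^ k) G" for j
    using N[of "Suc j"] N[of 1] unfolding k_def by simp
  have bnd: "natmul (p ^ k) t = 0" if t: "t \<in> ptors p G" for t
  proof (rule bounded_ptors[OF G red p _ t])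
    fix t a assume t: "t \<in> ptors p G"
    have "natmul (p ^ k) t \<in> mul_set (p ^ (k + a)) G" using Nk mul_set_in[of t G] t ptors_sub by blast
    then obtain g where g: "g \<in> G" "natmul (p ^ k) t = natmul (p ^ (k + a)) g" unfolding mul_set_def by auto
    have "natmul (p ^ k) t \<in> ptors p G" using ptors_natmul[OF G t] .
    then have "g \<in> ptors p G" using g ptors_back[of g G p "k + a"] by simp
    then show "\<exists>g\<in>ptors p G. natmul (p ^ k) t = natmul (p ^ (k + a)) g" using g(2) by blast
  qed
  have dec: "\<exists>t\<in>ptors p G. x - t \<in> mul_set (p ^ k) G" if x: "x \<in> G" for x
  proof -
    have "natmul (p ^ k) x \<in> mul_set (p ^ (k + k)) G" using Nk mul_set_in[OF x] by blast
    then obtain y where y: "y \<in> G" "natmul (p ^ k) x = natmul (p ^ (k + k)) y" unfolding mul_set_def by auto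
    define t where "t = x - natmul (p ^ k) y"
    have tG: "t \<in> G" unfolding t_def using subgrp_diff[OF G x subgrp_natmul[OF G y(1)]] .
    have "natmul (p ^ k) t = 0" unfolding t_def using y(2) by (simp add: natmul_diff natmul_mult[symmetric] power_add)
    then have "t \<in> ptors p G" unfolding ptors_def using tG by blast
    moreover have "x - t \<in> mul_set (p ^ k) G" unfolding t_def using mul_set_in[OF y(1)] by simp
    ultimately show ?thesis by blast
  qed
  show ?thesis using bnd dec unfolding k_def by blast
qed

lemma bound_from_T:
  fixes G :: "'a::ab_group_add set"
  assumes G: "subgrp G" and red: "reduced G" and sT: "strongly_coHopfian (torsion_part G)" and p: "prime p"
  shows "\<exists>k. \<forall>t\<in>ptors p G. natmul (p ^ k) t = 0"
proof -
  define T where "T = torsion_part G"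
  have sTT: "subgrp T" unfolding T_def
  proof -
    have "x + y \<in> torsion_part G" if xy: "x \<in> torsion_part G" "y \<in> torsion_part G" for x y
    proof -
      obtain m where m: "m > 0" "natmul m x = 0" "x \<in> G" using xy(1) unfolding torsion_part_def by auto
      obtain n where n: "n > 0" "natmul n y = 0" "y \<in> G" using xy(2) unfolding torsion_part_def by auto
      have "natmul (m * n) (x + y) = natmul n (natmul m x) + natmul m (natmul n y)"
        by (simp add: natmul_plus natmul_mult[symmetric] mult.commute)
      then have "natmul (m * n) (x + y) = 0" using m(2) n(2) by simp
      moreover have "m * n > 0" using m n by simp
      ultimately show ?thesis using m n subgrp_add[OF G] unfolding torsion_part_def by blast
    qed
    moreover have "- x \<in> torsion_part G" if "x \<in> torsion_part G" for x
      using that subgrp_neg[OF G] unfolding torsion_part_def by (auto simp: natmul_minus)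
    moreover have "0 \<in> torsion_part G" unfolding torsion_part_def using subgrp_0[OF G]
      by (auto intro!: exI[of _ 1])
    ultimately show "subgrp (torsion_part G)" unfolding subgrp_def by blast
  qed
  obtain N where N: "\<And>j. mul_set (p ^ (N + j)) T = mul_set (p ^ N) T" using sch_stab[OF sTT] sT unfolding T_def by blast
  have PT: "ptors p G \<subseteq> T" unfolding T_def using ptors_torsion[OF p] .
  have TG: "T \<subseteq> G" unfolding T_def torsion_part_def by auto
  have "natmul (p ^ N) t = 0" if t: "t \<in> ptors p G" for t
  proof (rule bounded_ptors[OF G red p _ t])
    fix t a assume t: "t \<in> ptors p G"
    have "natmul (p ^ N) t \<in> mul_set (p ^ (N + a)) T" using N mul_set_in[of t T] t PT by blast
    then obtain g where g: "g \<in> T" "natmul (p ^ N) t = natmul (p ^ (N + a)) g" unfolding mul_set_def by auto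
    have "natmul (p ^ N) t \<in> ptors p G" using ptors_natmul[OF G t] .
    then have "g \<in> ptors p G" using g TG ptors_back[of g G p "N + a"] by auto
    then show "\<exists>g\<in>ptors p G. natmul (p ^ N) t = natmul (p ^ (N + a)) g" using g(2) by blast
  qed
  then show ?thesis by blast
qed

lemma crux:
  fixes G :: "'a::ab_group_add set"
  assumes G: "subgrp G" and red: "reduced G" and ext: "Ext_Q_vanishes G" and adj: "adjusted G"
    and bnds: "\<And>q. prime q \<Longrightarrow> \<exists>k. \<forall>t\<in>ptors q G. natmul (q ^ k) t = 0"
    and p: "prime p" and x: "x \<in> G"
  shows "\<exists>t\<in>ptors p G. x - t \<in> mul_set (p ^ k') G"
proof -
  define P where "P = ptors p G"
  obtain k where k: "\<forall>t\<in>P. natmul (p ^ k) t = 0" using bnds[OF p] unfolding P_def by blast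
  obtain K where K: "subgrp K" "K \<subseteq> G" "\<forall>t\<in>P. t \<in> K \<longrightarrow> t = 0" "\<forall>x\<in>G. \<exists>t\<in>P. \<exists>c\<in>K. x = t + c"
    using retraction[OF G p k[unfolded P_def]] unfolding P_def by blast
  define Gp where "Gp = {u \<in> G. \<forall>d. coprime d p \<longrightarrow> u \<in> mul_set d G}"
  define W where "W = {w \<in> G. \<forall>n. w \<in> mul_set (p ^ n) G}"
  have msG: "subgrp (mul_set n G)" for n using mul_set_subgrp[OF G] .
  have sGp: "subgrp Gp" unfolding subgrp_def Gp_def
    using subgrp_0[OF G] subgrp_add[OF G] subgrp_neg[OF G] subgrp_0[OF msG] subgrp_add[OF msG] subgrp_neg[OF msG]
    by auto
  have sW: "subgrp W" unfolding subgrp_def W_def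
    using subgrp_0[OF G] subgrp_add[OF G] subgrp_neg[OF G] subgrp_0[OF msG] subgrp_add[OF msG] subgrp_neg[OF msG]
    by auto
  have sP: "subgrp P" unfolding P_def using ptors_subgrp[OF G] .
  have PG: "P \<subseteq> G" unfolding P_def by (rule ptors_sub)
  have PGp: "P \<subseteq> Gp" unfolding Gp_def P_def using ptors_in_mul_set[OF p G] ptors_sub by blast
  have GpW: "u = 0" if u: "u \<in> Gp" "u \<in> W" for u
  proof (rule Vzero[OF G red bnds])
    show "u \<in> G" using u unfolding W_def by blast
    fix q j :: nat assume q: "prime q"
    show "u \<in> mul_set (q ^ j) G"
    proof (cases "q = p")
      case True then show ?thesis using u(2) unfolding W_def by blast
    next
      case False
      have "coprime (q ^ j) p" using primes_coprime[OF q p False] by simp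
      then show ?thesis using u(1) unfolding Gp_def by blast
    qed
  qed
  define C where "C = Gp \<inter> K"
  define B where "B = sumset P W"
  have sC: "subgrp C" unfolding C_def subgrp_def using sGp K(1) unfolding subgrp_def by blast
  have CG: "C \<subseteq> G" unfolding C_def Gp_def by blast
  have sB: "subgrp B" unfolding B_def using sumset_subgrp[OF sP sW] .
  have BG: "B \<subseteq> G" unfolding B_def sumset_def W_def using PG subgrp_add[OF G] by blast
  have CB: "C \<inter> B = {0}"
  proof
    show "{0} \<subseteq> C \<inter> B" using subgrp_0[OF sC] subgrp_0[OF sB] by blast
    show "C \<inter> B \<subseteq> {0}"
    proof
      fix c assume "c \<in> C \<inter> B"
      then obtain t w where c: "c \<in> Gp" "c \<in> K" "t \<in> P" "w \<in> W" "c = t + w"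
        unfolding C_def B_def sumset_def by blast
      have "c - t \<in> Gp" using subgrp_diff[OF sGp c(1)] PGp c(3) by blast
      moreover have "c - t \<in> W" using c by simp
      ultimately have "c - t = 0" using GpW by blast
      then have "c \<in> P" using c(3) by simp
      then show "c \<in> {0}" using K(3) c(2) by blast
    qed
  qed
  have dec: "\<exists>c\<in>C. \<exists>t\<in>P. \<exists>w\<in>W. y = c + (t + w)" if y: "y \<in> G" for y
  proof -
    obtain w where w: "w \<in> G" "\<forall>n. w \<in> mul_set (p ^ n) G" "\<forall>d. coprime d p \<longrightarrow> y - w \<in> mul_set d G"
      using decomp[OF G ext p y] by blast
    have wW: "w \<in> W" unfolding W_def using w by blast
    have uGp: "y - w \<in> Gp" unfolding Gp_def using w subgrp_diff[OF G y w(1)] by blast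
    obtain t c where tc: "t \<in> P" "c \<in> K" "y - w = t + c" using K(4) subgrp_diff[OF G y w(1)] by blast
    have "c = (y - w) - t" using tc(3) by simp
    then have "c \<in> Gp" using subgrp_diff[OF sGp uGp] PGp tc(1) by blast
    then have "c \<in> C" unfolding C_def using tc(2) by blast
    moreover have "y = c + (t + w)" using tc(3) by (simp add: algebra_simps)
    ultimately show ?thesis using tc(1) wW by blast
  qed
  have sum: "{a + b | a b. a \<in> C \<and> b \<in> B} = G"
  proof
    show "{a + b | a b. a \<in> C \<and> b \<in> B} \<subseteq> G" using CG BG subgrp_add[OF G] by blast
    show "G \<subseteq> {a + b | a b. a \<in> C \<and> b \<in> B}"
    proof
      fix y assume "y \<in> G"
      then obtain c t w where "c \<in> C" "t \<in> P" "w \<in> W" "y = c + (t + w)" using dec by blast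
      then show "y \<in> {a + b | a b. a \<in> C \<and> b \<in> B}" unfolding B_def sumset_def by blast
    qed
  qed
  have dsC: "direct_summand C G" unfolding direct_summand_def using sC CG sB BG CB sum by blast
  have tfC: "torsion_free C" unfolding torsion_free_def
  proof (intro ballI allI impI)
    fix z n assume z: "z \<in> C" and n: "0 < (n::nat)" and nz: "natmul n z = 0"
    obtain n' where n': "n = p ^ multiplicity p n * n'" "\<not> p dvd n'"
      using multiplicity_decompose'[of n p] n p by (metis not_prime_unit neq0_conv)
    define a where "a = multiplicity p n"
    define y where "y = natmul (p ^ a) z"
    have zG: "z \<in> G" using z CG by blast
    have yGp: "y \<in> Gp" unfolding y_def using z unfolding C_def
      using sGp subgrp_natmul by blast
    have ny: "natmul n' y = 0" unfolding y_def using nz n'(1) unfolding a_def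
      by (metis natmul_mult mult.commute)
    have "y \<in> W" unfolding W_def
    proof (intro CollectI conjI allI)
      show "y \<in> G" using yGp unfolding Gp_def by blast
      fix j
      have "coprime (p ^ j) n'" using prime_imp_coprime[OF p n'(2)] by simp
      then obtain u where "natmul (p ^ j) (natmul u y) = y" using CD[OF ny] by blast
      then show "y \<in> mul_set (p ^ j) G" using mul_set_in subgrp_natmul[OF G] \<open>y \<in> G\<close> by metis
    qed
    then have "y = 0" using GpW yGp by blast
    then have "z \<in> P" unfolding P_def ptors_def y_def using zG by blast
    then show "z = 0" using K(3) z unfolding C_def by blast
  qed
  have "C = {0}" using adj dsC tfC unfolding adjusted_def by blast
  obtain c t w where ctw: "c \<in> C" "t \<in> P" "w \<in> W" "x = c + (t + w)" using dec[OF x] by blast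
  have "c = 0" using ctw(1) \<open>C = {0}\<close> by blast
  then have "x - t = w" using ctw(4) by simp
  moreover have "w \<in> mul_set (p ^ k') G" using ctw(3) unfolding W_def by blast
  ultimately show ?thesis using ctw(2) unfolding P_def by auto
qed

theorem mainTheorem8:
  fixes G :: "'a::ab_group_add set"
  assumes "subgrp G" and "reduced G" and "cotorsion G" and "adjusted G"
  shows "strongly_coHopfian G \<longleftrightarrow> strongly_coHopfian (torsion_part G)"
proof -
  have G: "subgrp G" and red: "reduced G" using assms by auto
  have ext: "Ext_Q_vanishes G" using assms(3) unfolding cotorsion_def by blast
  show ?thesis
  proof
    assume sG: "strongly_coHopfian G"
    show "strongly_coHopfian (torsion_part G)"
      by (rule dirB[OF G red ext _ sG]) (rule S_from_G[OF G red sG])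
  next
    assume sT: "strongly_coHopfian (torsion_part G)"
    have bnds: "\<And>q. prime q \<Longrightarrow> \<exists>k. \<forall>t\<in>ptors q G. natmul (q ^ k) t = 0"
      using bound_from_T[OF G red sT] by blast
    show "strongly_coHopfian G"
    proof (rule dirA[OF G red ext _ sT])
      fix p :: nat assume p: "prime p"
      obtain k where k: "\<forall>t\<in>ptors p G. natmul (p ^ k) t = 0" using bnds[OF p] by blast
      have k': "\<forall>t\<in>ptors p G. natmul (p ^ Suc k) t = 0" using k by (simp add: natmul_mult)
      have "\<forall>x\<in>G. \<exists>t\<in>ptors p G. x - t \<in> mul_set (p ^ Suc k) G"
        using crux[OF G red ext assms(4) bnds p] by blast
      then show "\<exists>k. 0 < k \<and> (\<forall>t\<in>ptors p G. natmul (p ^ k) t = 0) \<and> (\<forall>x\<in>G. \<exists>t\<in>ptors p G. x - t \<in> mul_set (p ^ k) G)"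
        using k' by blast
    qed
  qed
qed

end
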